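(* Let $Y\in\mathbb R^{m\times n}$ ($m,n\ge1$). (a) $Y\in\operatorname{Sing}^\times_{m,n}$ if and only if for every $\varepsilon>0$ there exists $t_0>0$ such that for every $t\ge t_0$ there is $a\in C_0(t)$ with $\delta(\exp(a)x_Y)<\varepsilon$ (equivalently, $(tE_1).x_Y\cap\{x\in X:\delta(x)<\varepsilon\}\ne\emptyset$). (b) $Y\in\operatorname{WA}^\times_{m,n}$ if and only if for every $\varepsilon>0$ the set of $t\ge0$ for which there is $a\in C_0(t)$ with $\delta(\exp(a)x_Y)<\varepsilon$ is unbounded; equivalently, the orbit $\{\exp(a)x_Y:a\in E\}$ is unbounded (not relatively compact) in $X$.
   Context: $G=\operatorname{SL}_{m+n}(\mathbb R)$, $X=G/\operatorname{SL}_{m+n}(\mathbb Z)$ identified with unimodular lattices in $\mathbb R^{m+n}$; $\mathfrak a=\{\operatorname{diag}(a_1,\dots,a_{m+n}):\sum a_i=0\}$, acting by $a.x=\exp(a)x$. $\delta(x):=\min\{\|\boldsymbol v\|_\infty:\boldsymbol v\in x\setminus\{0\}\}$; $x_Y:=\begin{pmatrix}I_m&Y\\0&I_n\end{pmatrix}\mathbb Z^{m+n}$. $E:=\{a\in\mathfrak a:a_1,\dots,a_m>0,\ a_{m+1},\dots,a_{m+n}<0\}$; $C_0(t):=\{a\in E:a_1+\dots+a_m=t\}$; $E_1:=C_0(1)$. With $Y_i$ the rows of $Y$ and $\Pi_+(\boldsymbol q)=\prod_j\max\{1,|q_j|\}$, for $\psi:(1,\infty)\to(0,\infty)$ and $T>1$,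 $\mathcal S^\times_{m,n}(\psi,T)$ is the set of $Y$ admitting $\boldsymbol p\in\mathbb Z^m$, $\boldsymbol q\in\mathbb Z^n\setminus\{0\}$ with $\prod_i|Y_i\boldsymbol q-p_i|<\psi(T)$, $\Pi_+(\boldsymbol q)<T$; $\operatorname{D}^\times_{m,n}(\psi):=\bigcup_{T_0>1}\bigcap_{T\ge T_0}\mathcal S^\times_{m,n}(\psi,T)$, $\operatorname{W}^\times_{m,n}(\psi):=\limsup_{T\to\infty}\mathcal S^\times_{m,n}(\psi,T)$ (the set of $Y$ lying in $\mathcal S^\times_{m,n}(\psi,T)$ for an unbounded set of $T$); $\psi_1(x)=1/x$; $\operatorname{Sing}^\times_{m,n}:=\bigcap_{c>0}\operatorname{D}^\times_{m,n}(c\psi_1)$, $\operatorname{WA}^\times_{m,n}:=\bigcap_{c>0}\operatorname{W}^\times_{m,n}(c\psi_1)$. *)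

theory Defs
  imports "HOL-Analysis.Analysis"
begin

text \<open>Coordinates of R^(m+n) are indexed by the sum type 'm::finite + 'n::finite:
  Inl i (i = 1..m) and Inr j (j = 1..n). A matrix Y in R^(m x n) is real^'n::finite^'m::finite.\<close>

definition lattice_xY :: "real^'n::finite^'m::finite \<Rightarrow> (real^('m::finite + 'n::finite)) set" where
  "lattice_xY Y = {v. \<exists>(p::'m \<Rightarrow> int) (q::'n \<Rightarrow> int).
      v = (\<chi> k. case k of Inl i \<Rightarrow> of_int (p i) + (\<Sum>j\<in>UNIV. Y $ i $ j * of_int (q j))
                         | Inr j \<Rightarrow> of_int (q j))}"

definition exp_act :: "real^'k::finite \<Rightarrow> real^'k::finite \<Rightarrow> real^'k::finite" where
  "exp_act a v = (\<chi> k. exp (a $ k) * v $ k)"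

definition supnorm :: "real^'k::finite \<Rightarrow> real" where
  "supnorm v = Max (range (\<lambda>k. \<bar>v $ k\<bar>))"

definition delta :: "(real^'k::finite) set \<Rightarrow> real" where
  "delta L = Inf {supnorm v | v. v \<in> L \<and> v \<noteq> 0}"

definition frak_a :: "(real^('m::finite + 'n::finite)) set" where
  "frak_a = {a. (\<Sum>k\<in>UNIV. a $ k) = 0}"

definition E_cone :: "(real^('m::finite + 'n::finite)) set" where
  "E_cone = {a \<in> frak_a. (\<forall>i. a $ Inl i > 0) \<and> (\<forall>j. a $ Inr j < 0)}"

definition C0 :: "real \<Rightarrow> (real^('m::finite + 'n::finite)) set" where
  "C0 t = {a \<in> E_cone. (\<Sum>i\<in>UNIV. a $ Inl i) = t}"

definition S_times :: "(real \<Rightarrow> real) \<Rightarrow> real \<Rightarrow> (real^'n::finite^'m::finite) set" where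
  "S_times psi T = {Y. \<exists>(p::'m \<Rightarrow> int) (q::'n \<Rightarrow> int). q \<noteq> (\<lambda>_. 0) \<and>
      (\<Prod>i\<in>UNIV. \<bar>(\<Sum>j\<in>UNIV. Y $ i $ j * of_int (q j)) - of_int (p i)\<bar>) < psi T \<and>
      (\<Prod>j\<in>UNIV. max 1 \<bar>real_of_int (q j)\<bar>) < T}"

definition D_times :: "(real \<Rightarrow> real) \<Rightarrow> (real^'n::finite^'m::finite) set" where
  "D_times psi = (\<Union>T0\<in>{1<..}. \<Inter>T\<in>{T0..}. S_times psi T)"

definition W_times :: "(real \<Rightarrow> real) \<Rightarrow> (real^'n::finite^'m::finite) set" where
  "W_times psi = {Y. \<forall>R. \<exists>T\<ge>R. T > 1 \<and> Y \<in> S_times psi T}"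

definition psi1 :: "real \<Rightarrow> real" where
  "psi1 x = 1 / x"

definition Sing_times :: "(real^'n::finite^'m::finite) set" where
  "Sing_times = (\<Inter>c\<in>{0<..}. D_times (\<lambda>x. c * psi1 x))"

definition WA_times :: "(real^'n::finite^'m::finite) set" where
  "WA_times = (\<Inter>c\<in>{0<..}. W_times (\<lambda>x. c * psi1 x))"

definition int_vectors :: "(real^'k::finite) set" where
  "int_vectors = {z. \<forall>k. z $ k \<in> \<int>}"

definition lattice_of :: "real^'k::finite^'k \<Rightarrow> (real^'k::finite) set" where
  "lattice_of g = (\<lambda>z. g *v z) ` int_vectors"

text \<open>A set of unimodular lattices is relatively compact in X = SL(R)/SL(Z)
  (quotient topology) iff it is contained in pi(K) for a compact K in SL(R).\<close>
definition rel_compact_in_X :: "(real^'k::finite) set set \<Rightarrow> bool" where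
  "rel_compact_in_X S \<longleftrightarrow> (\<exists>K. compact K \<and> (\<forall>g\<in>K. det g = 1) \<and>
      (\<forall>L\<in>S. \<exists>g\<in>K. lattice_of g = L))"

end

theory Submission
  imports Defs
begin


lemma sum_UNIV_plus: "(\<Sum>k\<in>(UNIV::('m::finite+'n::finite) set). f k) = (\<Sum>i\<in>UNIV. f (Inl i)) + (\<Sum>j\<in>UNIV. f (Inr j))"
  using sum.Plus[of "UNIV::'m set" "UNIV::'n set" f] by (simp add: UNIV_Plus_UNIV comp_def)

lemma prod_UNIV_plus: "(\<Prod>k\<in>(UNIV::('m::finite+'n::finite) set). f k) = (\<Prod>i\<in>UNIV. f (Inl i)) * (\<Prod>j\<in>UNIV. f (Inr j))"
  using prod.Plus[of "UNIV::'m set" "UNIV::'n set" f] by (simp add: UNIV_Plus_UNIV comp_def)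

lemma supnorm_lt_iff: "supnorm (v::real^'k::finite) < e \<longleftrightarrow> (\<forall>k. \<bar>v$k\<bar> < e)"
  unfolding supnorm_def by (subst Max_less_iff) auto

lemma supnorm_ge: "\<bar>(v::real^'k::finite)$k\<bar> \<le> supnorm v"
  unfolding supnorm_def by (rule Max_ge) auto

lemma supnorm_nonneg: "0 \<le> supnorm (v::real^'k::finite)"
  using supnorm_ge[of v] abs_ge_zero order_trans by blast

lemma supnorm_le_norm: "supnorm (v::real^'k::finite) \<le> norm v"
proof -
  have "supnorm v \<in> range (\<lambda>k. \<bar>v$k\<bar>)" unfolding supnorm_def by (rule Max_in) auto
  then obtain k where "supnorm v = \<bar>v$k\<bar>" by auto
  then show ?thesis using component_le_norm_cart[of v k] by simp
qed

lemma delta_le: "v \<in> L \<Longrightarrow> v \<noteq> 0 \<Longrightarrow> delta L \<le> supnorm (v::real^'k::finite)"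
  unfolding delta_def
  by (rule cInf_lower) (auto intro!: bdd_belowI[where m=0] simp: supnorm_nonneg)

lemma delta_lt: assumes "delta L < e" "v0 \<in> L" "v0 \<noteq> 0"
  shows "\<exists>v\<in>L. v \<noteq> 0 \<and> supnorm (v::real^'k::finite) < e"
proof -
  have ne: "{supnorm v |v. v \<in> L \<and> v \<noteq> 0} \<noteq> {}" using assms by auto
  from assms(1) have "Inf {supnorm v |v. v \<in> L \<and> v \<noteq> 0} < e" unfolding delta_def .
  moreover have bdd: "bdd_below {supnorm v |v. v \<in> L \<and> v \<noteq> 0}"
    by (auto intro!: bdd_belowI[where m=0] simp: supnorm_nonneg)
  ultimately obtain x where "x \<in> {supnorm v |v. v \<in> L \<and> v \<noteq> 0}" "x < e"
    using cInf_less_iff[OF ne bdd, of e] by blast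
  then show ?thesis by auto
qed

lemma delta_ge: assumes "\<And>v. v \<in> L \<Longrightarrow> v \<noteq> 0 \<Longrightarrow> c \<le> supnorm v" "v0 \<in> L" "v0 \<noteq> 0"
  shows "c \<le> delta (L::(real^'k::finite) set)"
  unfolding delta_def using assms by (intro cInf_greatest) auto


definition vecYpq :: "real^'n::finite^'m::finite \<Rightarrow> ('m \<Rightarrow> int) \<Rightarrow> ('n \<Rightarrow> int) \<Rightarrow> real^('m+'n)" where
  "vecYpq Y p q = (\<chi> k. case k of Inl i \<Rightarrow> of_int (p i) + (\<Sum>j\<in>UNIV. Y $ i $ j * of_int (q j))
                         | Inr j \<Rightarrow> of_int (q j))"

lemma lattice_xY_iff: "v \<in> lattice_xY Y \<longleftrightarrow> (\<exists>p q. v = vecYpq Y p q)"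
  unfolding lattice_xY_def vecYpq_def by auto

lemma vecYpq_Inl[simp]: "vecYpq Y p q $ Inl i = of_int (p i) + (\<Sum>j\<in>UNIV. Y $ i $ j * of_int (q j))"
  by (simp add: vecYpq_def)
lemma vecYpq_Inr[simp]: "vecYpq Y p q $ Inr j = of_int (q j)"
  by (simp add: vecYpq_def)

lemma exp_act_nth[simp]: "exp_act a v $ k = exp (a $ k) * v $ k"
  by (simp add: exp_act_def)

lemma C0_props:
  fixes a :: "real^('m::finite+'n::finite)"
  assumes "a \<in> C0 t"
  shows "\<And>i. a $ Inl i > 0" "\<And>j. a $ Inr j < 0" "(\<Sum>i\<in>UNIV. a $ Inl i) = t"
    "(\<Sum>j\<in>UNIV. a $ Inr j) = - t"
proof -
  show "\<And>i. a $ Inl i > 0" "\<And>j. a $ Inr j < 0" "(\<Sum>i\<in>UNIV. a $ Inl i) = t"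
    using assms by (auto simp: C0_def E_cone_def)
  have "(\<Sum>k\<in>UNIV. a $ k) = 0" using assms by (auto simp: C0_def E_cone_def frak_a_def)
  then show "(\<Sum>j\<in>UNIV. a $ Inr j) = - t"
    using assms by (auto simp: C0_def sum_UNIV_plus)
qed

lemma lattice_nonzero_elem:
  fixes Y :: "real^'n::finite^'m::finite" and a :: "real^('m+'n)"
  shows "exp_act a (vecYpq Y (\<lambda>_. 1) (\<lambda>_. 0)) \<in> exp_act a ` lattice_xY Y \<and>
         exp_act a (vecYpq Y (\<lambda>_. 1) (\<lambda>_. 0)) \<noteq> 0"
proof
  show "exp_act a (vecYpq Y (\<lambda>_. 1) (\<lambda>_. 0)) \<in> exp_act a ` lattice_xY Y"
    using lattice_xY_iff by blast
  have "exp_act a (vecYpq Y (\<lambda>_. 1) (\<lambda>_. 0)) $ Inl undefined \<noteq> 0" by simp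
  then show "exp_act a (vecYpq Y (\<lambda>_. 1) (\<lambda>_. 0)) \<noteq> 0" by (metis zero_index)
qed

lemma extract_lem:
  fixes Y :: "real^'n::finite^'m::finite" and a :: "real^('m+'n)"
  assumes a: "a \<in> C0 t" and e: "0 < e" "e \<le> 1" and d: "delta (exp_act a ` lattice_xY Y) < e"
  shows "\<exists>p q. q \<noteq> (\<lambda>_. 0) \<and>
     (\<Prod>i\<in>UNIV. \<bar>(\<Sum>j\<in>UNIV. Y $ i $ j * of_int (q j)) - of_int (p i)\<bar>) * exp t < e ^ CARD('m) \<and>
     (\<Prod>j\<in>UNIV. max 1 \<bar>real_of_int (q j)\<bar>) < exp t"
proof -
  note ap = C0_props[OF a]
  obtain v where v: "v \<in> exp_act a ` lattice_xY Y" "v \<noteq> 0" "supnorm v < e"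
    using delta_lt[OF d] lattice_nonzero_elem[of a Y] by blast
  then obtain p q where vpq: "v = exp_act a (vecYpq Y p q)" using lattice_xY_iff by (metis imageE)
  have sm: "\<bar>exp (a $ k) * vecYpq Y p q $ k\<bar> < e" for k
    using v(3) unfolding supnorm_lt_iff vpq by simp
  have qnz: "q \<noteq> (\<lambda>_. 0)"
  proof
    assume q0: "q = (\<lambda>_. 0)"
    have "\<exists>k. v $ k \<noteq> 0" using v(2) by (metis vec_eq_iff zero_index)
    then obtain k where k: "v $ k \<noteq> 0" by blast
    show False
    proof (cases k)
      case (Inr j) then show False using k q0 vpq by simp
    next
      case (Inl i)
      then have pi: "p i \<noteq> 0" using k q0 vpq by simp
      then have "1 \<le> \<bar>real_of_int (p i)\<bar>" by linarith
      moreover have "1 < exp (a $ Inl i)" using ap(1)[of i] by simp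
      ultimately have "1 < exp (a $ Inl i) * \<bar>real_of_int (p i)\<bar>"
        by (metis less_le_trans mult.right_neutral mult_left_mono exp_ge_zero order.strict_implies_order less_1_mult one_less_exp_iff)
      then show False using sm[of "Inl i"] q0 e by (simp add: abs_mult)
    qed
  qed
  let ?f = "\<lambda>i. \<bar>(\<Sum>j\<in>UNIV. Y $ i $ j * of_int ((-p) i)) - of_int (p i)\<bar>"
  have "(\<Prod>i\<in>UNIV. \<bar>(\<Sum>j\<in>UNIV. Y $ i $ j * of_int (q j)) - of_int ((- p) i)\<bar>) * exp t
        = (\<Prod>i\<in>UNIV. exp (a $ Inl i) * \<bar>vecYpq Y p q $ Inl i\<bar>)"
    using ap(3) by (simp add: prod.distrib exp_sum[symmetric] mult.commute add.commute)
  also have "\<dots> < (\<Prod>i\<in>(UNIV::'m set). e)"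
  proof (rule prod_mono_strict[where i=undefined])
    fix i :: 'm
    show "exp (a $ Inl i) * \<bar>vecYpq Y p q $ Inl i\<bar> < e" using sm[of "Inl i"] by (simp add: abs_mult)
    then show "0 \<le> exp (a $ Inl i) * \<bar>vecYpq Y p q $ Inl i\<bar> \<and> exp (a $ Inl i) * \<bar>vecYpq Y p q $ Inl i\<bar> \<le> e"
      by simp
  qed (use e in \<open>auto simp del: vecYpq_Inl\<close>)
  also have "\<dots> = e ^ CARD('m)" by simp
  finally have P: "(\<Prod>i\<in>UNIV. \<bar>(\<Sum>j\<in>UNIV. Y $ i $ j * of_int (q j)) - of_int ((- p) i)\<bar>) * exp t < e ^ CARD('m)" .
  have "(\<Prod>j\<in>UNIV. max 1 \<bar>real_of_int (q j)\<bar>) < (\<Prod>j\<in>(UNIV::'n set). exp (- a $ Inr j))"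
  proof (rule prod_mono_strict[where i=undefined])
    fix j :: 'n
    have e1: "1 < exp (- a $ Inr j)" using ap(2)[of j] by simp
    have "exp (a $ Inr j) * \<bar>real_of_int (q j)\<bar> < e" using sm[of "Inr j"] by (simp add: abs_mult)
    then have "\<bar>real_of_int (q j)\<bar> < e * exp (- a $ Inr j)"
      by (simp add: exp_minus field_simps)
    also have "\<dots> \<le> exp (- a $ Inr j)" using e by simp
    finally show "max 1 \<bar>real_of_int (q j)\<bar> < exp (- a $ Inr j)" using e1 by simp
    then show "0 \<le> max 1 \<bar>real_of_int (q j)\<bar> \<and> max 1 \<bar>real_of_int (q j)\<bar> \<le> exp (- a $ Inr j)" by simp
  qed auto
  also have "\<dots> = exp t" using ap(4) by (simp add: exp_sum[symmetric] sum_negf)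
  finally show ?thesis using P qnz by blast
qed


lemma construct_lem:
  fixes Y :: "real^'n::finite^'m::finite" and p :: "'m \<Rightarrow> int" and q :: "'n \<Rightarrow> int"
  defines "f \<equiv> \<lambda>i. \<bar>(\<Sum>j\<in>UNIV. Y $ i $ j * of_int (q j)) - of_int (p i)\<bar>"
  assumes e: "0 < e" "e \<le> 1" and t: "0 < t" and qnz: "q \<noteq> (\<lambda>_. 0)"
    and fe: "\<And>i. f i < e"
    and Q: "(\<Prod>j\<in>UNIV. max 1 \<bar>real_of_int (q j)\<bar>) < e ^ CARD('n) * exp t"
    and P: "(\<Prod>i\<in>UNIV. f i) * exp t < e ^ CARD('m)"
  shows "\<exists>a\<in>(C0 t :: (real^('m+'n)) set). delta (exp_act a ` lattice_xY Y) < e"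
proof -
  define tg where "tg = e ^ CARD('m) * exp (- t)"
  define \<phi> where "\<phi> = (\<lambda>s. \<Prod>i\<in>(UNIV::'m set). f i + s * (e - f i))"
  have f0: "0 \<le> f i" for i unfolding f_def by simp
  have phi0: "\<phi> 0 < tg" using P unfolding \<phi>_def tg_def by (simp add: exp_minus field_simps)
  have phi1: "tg < \<phi> 1" unfolding \<phi>_def tg_def using t e by simp
  have "continuous_on {0..1} \<phi>" unfolding \<phi>_def by (intro continuous_intros)
  then obtain s where s: "0 \<le> s" "s \<le> 1" "\<phi> s = tg"
    using IVT'[of \<phi> 0 tg 1] phi0 phi1 by auto
  have s0: "0 < s" using s phi0 by (cases "s = 0") auto
  have s1: "s < 1" using s phi1 by (cases "s = 1") auto
  define g where "g = (\<lambda>i. f i + s * (e - f i))"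
  have fg: "f i < g i" for i unfolding g_def using s0 fe[of i] by simp
  have g0: "0 < g i" for i using fg[of i] f0[of i] by linarith
  have ge: "g i < e" for i
  proof -
    have "e - g i = (1 - s) * (e - f i)" unfolding g_def by algebra
    also have "\<dots> > 0" using s1 fe[of i] by simp
    finally show ?thesis by simp
  qed
  have prodg: "(\<Prod>i\<in>UNIV. g i) = tg" using s(3) unfolding \<phi>_def g_def .
  define Q where "Q = (\<Prod>j\<in>(UNIV::'n set). max 1 \<bar>real_of_int (q j)\<bar>)"
  have Qpos: "0 < Q" unfolding Q_def by (intro prod_pos) auto
  define nn where "nn = real CARD('n)"
  have nnpos: "0 < nn" unfolding nn_def by simp
  define u where "u = (t - ln Q + nn * ln e) / nn"
  have "ln Q < ln (e ^ CARD('n) * exp t)" using Q Qpos e unfolding Q_def by simp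
  then have "ln Q < nn * ln e + t" using e by (simp add: ln_mult ln_realpow nn_def)
  then have u0: "0 < u" unfolding u_def using nnpos by simp
  define a :: "real^('m+'n)" where
    "a = (\<chi> k. case k of Inl i \<Rightarrow> ln (e / g i)
                   | Inr j \<Rightarrow> - (ln (max 1 \<bar>real_of_int (q j)\<bar>) - ln e + u))"
  have aL: "a $ Inl i = ln (e / g i)" for i unfolding a_def by simp
  have aR: "a $ Inr j = - (ln (max 1 \<bar>real_of_int (q j)\<bar>) - ln e + u)" for j unfolding a_def by simp
  have sumL: "(\<Sum>i\<in>UNIV. a $ Inl i) = t"
  proof -
    have "(\<Sum>i\<in>UNIV. a $ Inl i) = (\<Sum>i\<in>(UNIV::'m set). ln e - ln (g i))"
    proof (intro sum.cong refl)
      fix i show "a $ Inl i = ln e - ln (g i)" using g0[of i] e by (simp add: aL ln_div)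
    qed
    also have "\<dots> = real CARD('m) * ln e - ln (\<Prod>i\<in>UNIV. g i)"
      using g0 ln_prod[of UNIV g] by (simp add: sum_subtractf less_imp_neq[symmetric])
    also have "\<dots> = t" unfolding prodg tg_def using e by (simp add: ln_mult ln_realpow)
    finally show ?thesis .
  qed
  have sumR: "(\<Sum>j\<in>UNIV. a $ Inr j) = - t"
  proof -
    have "(\<Sum>j\<in>UNIV. a $ Inr j) = - ((\<Sum>j\<in>(UNIV::'n set). ln (max 1 \<bar>real_of_int (q j)\<bar>)) - nn * ln e + nn * u)"
      by (simp add: aR sum_negf sum.distrib sum_subtractf nn_def algebra_simps)
    also have "(\<Sum>j\<in>(UNIV::'n set). ln (max 1 \<bar>real_of_int (q j)\<bar>)) = ln Q"
      unfolding Q_def by (subst ln_prod) auto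
    also have "nn * u = t - ln Q + nn * ln e" unfolding u_def using nnpos by simp
    finally show ?thesis by simp
  qed
  have aC0: "a \<in> C0 t"
    unfolding C0_def E_cone_def frak_a_def
  proof (intro CollectI conjI allI)
    show "(\<Sum>k\<in>UNIV. a $ k) = 0" using sumL sumR by (simp add: sum_UNIV_plus)
    show "(\<Sum>i\<in>UNIV. a $ Inl i) = t" by (rule sumL)
    fix i show "0 < a $ Inl i" unfolding aL using g0[of i] ge[of i] e by simp
  next
    fix j show "a $ Inr j < 0"
      unfolding aR using u0 e by (simp add: ln_ge_zero_iff) (smt (verit) ln_le_zero_iff ln_ge_zero)
  qed
  define w where "w = exp_act a (vecYpq Y (- p) q)"
  have wmem: "w \<in> exp_act a ` lattice_xY Y" unfolding w_def using lattice_xY_iff by blast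
  obtain j0 where j0: "q j0 \<noteq> 0" using qnz by auto
  have wnz: "w \<noteq> 0"
  proof
    assume "w = 0"
    then have "w $ Inr j0 = 0" by simp
    then show False using j0 unfolding w_def by simp
  qed
  have "supnorm w < e"
    unfolding supnorm_lt_iff
  proof
    fix k show "\<bar>w $ k\<bar> < e"
    proof (cases k)
      case (Inl i)
      have eq: "\<bar>w $ k\<bar> = (e / g i) * f i"
        unfolding w_def Inl using g0[of i] e by (simp add: aL abs_mult f_def)
      have "(e / g i) * f i < (e / g i) * g i"
        using fg[of i] g0[of i] e by (intro mult_strict_left_mono) auto
      then show ?thesis using eq g0[of i] by simp
    next
      case (Inr j)
      let ?M = "max 1 \<bar>real_of_int (q j)\<bar>"
      have M0: "0 < ?M" by simp
      have "exp (a $ Inr j) = e * exp (- u) / ?M"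
        unfolding aR using e by (simp add: exp_diff exp_minus exp_add field_simps)
      then have eq: "\<bar>w $ k\<bar> = e * exp (- u) * (\<bar>real_of_int (q j)\<bar> / ?M)"
        unfolding w_def Inr using e by (simp add: abs_mult)
      have "\<bar>real_of_int (q j)\<bar> / ?M \<le> 1" using M0 by simp
      then have "\<bar>w $ k\<bar> \<le> e * exp (- u)" unfolding eq using e
        by (intro mult_left_le) auto
      also have "\<dots> < e" using e u0 by simp
      finally show ?thesis .
    qed
  qed
  then have "delta (exp_act a ` lattice_xY Y) < e"
    using delta_le[OF wmem wnz] by linarith
  then show ?thesis using aC0 by blast
qed


lemma dirichlet:
  fixes x :: "'m::finite \<Rightarrow> real" and M :: nat
  assumes M: "1 \<le> M"
  shows "\<exists>N::nat. 1 \<le> N \<and> N \<le> M ^ CARD('m) \<and> (\<forall>i. \<exists>p::int. \<bar>real N * x i - of_int p\<bar> < 1 / real M)"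
proof -
  define F where "F = (\<lambda>N::nat. \<lambda>i. \<lfloor>real M * frac (real N * x i)\<rfloor>)"
  define S where "S = PiE (UNIV::'m set) (\<lambda>_. {0..<int M})"
  have FS: "F ` {0..M ^ CARD('m)} \<subseteq> S"
  proof
    fix y assume "y \<in> F ` {0..M ^ CARD('m)}"
    then obtain N where y: "y = F N" by auto
    have "y i \<in> {0..<int M}" for i
    proof -
      have f0: "0 \<le> frac (real N * x i)" "frac (real N * x i) < 1" by (auto simp: frac_lt_1)
      have "0 \<le> real M * frac (real N * x i)" using f0 by simp
      moreover have "real M * frac (real N * x i) < real M" using f0 M by simp
      ultimately show ?thesis unfolding y F_def by (auto simp: floor_less_iff)
    qed
    then show "y \<in> S" unfolding S_def by (auto simp: PiE_UNIV_domain)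
  qed
  have cS: "card S = M ^ CARD('m)" unfolding S_def by (simp add: card_PiE)
  have "card (F ` {0..M ^ CARD('m)}) \<le> card S"
    by (rule card_mono[OF _ FS]) (simp add: S_def finite_PiE)
  then have "card (F ` {0..M ^ CARD('m)}) < card {0..M ^ CARD('m)}" using cS by simp
  then have "\<not> inj_on F {0..M ^ CARD('m)}" using pigeonhole by blast
  then obtain N1 N2 where N12: "N1 \<in> {0..M ^ CARD('m)}" "N2 \<in> {0..M ^ CARD('m)}" "F N1 = F N2" "N1 < N2"
    unfolding inj_on_def by (metis linorder_neqE_nat)
  define N where "N = N2 - N1"
  have "\<exists>p::int. \<bar>real N * x i - of_int p\<bar> < 1 / real M" for i
  proof -
    let ?a = "real M * frac (real N2 * x i)" and ?b = "real M * frac (real N1 * x i)"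
    have "\<lfloor>?a\<rfloor> = \<lfloor>?b\<rfloor>" using N12(3) unfolding F_def by metis
    then have ab: "\<bar>?a - ?b\<bar> < 1" by linarith
    have "real N * x i = of_int (\<lfloor>real N2 * x i\<rfloor> - \<lfloor>real N1 * x i\<rfloor>) + (frac (real N2 * x i) - frac (real N1 * x i))"
      unfolding N_def using N12(4) by (simp add: frac_def of_nat_diff algebra_simps)
    then have "\<bar>real N * x i - of_int (\<lfloor>real N2 * x i\<rfloor> - \<lfloor>real N1 * x i\<rfloor>)\<bar>
       = \<bar>frac (real N2 * x i) - frac (real N1 * x i)\<bar>" by simp
    also have "\<dots> < 1 / real M"
    proof -
      have "\<bar>?a - ?b\<bar> = real M * \<bar>frac (real N2 * x i) - frac (real N1 * x i)\<bar>"
        by (simp add: abs_mult right_diff_distrib[symmetric])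
      then show ?thesis using ab M by (simp add: field_simps)
    qed
    finally show ?thesis by blast
  qed
  moreover have "1 \<le> N" "N \<le> M ^ CARD('m)" using N12 unfolding N_def by auto
  ultimately show ?thesis by blast
qed

lemma improve_lem:
  fixes e :: real
  assumes e: "0 < e"
  shows "\<exists>K\<ge>1. \<forall>(Y::real^'n::finite^'m::finite) (p::'m \<Rightarrow> int) (q::'n \<Rightarrow> int). q \<noteq> (\<lambda>_. 0) \<longrightarrow>
     (\<exists>p' q'. q' \<noteq> (\<lambda>_. 0) \<and>
        (\<forall>i. \<bar>(\<Sum>j\<in>UNIV. Y $ i $ j * of_int (q' j)) - of_int (p' i)\<bar> < e \<and>
             \<bar>(\<Sum>j\<in>UNIV. Y $ i $ j * of_int (q' j)) - of_int (p' i)\<bar>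
               \<le> K * \<bar>(\<Sum>j\<in>UNIV. Y $ i $ j * of_int (q j)) - of_int (p i)\<bar>) \<and>
        (\<Prod>j\<in>UNIV. max 1 \<bar>real_of_int (q' j)\<bar>) \<le> K ^ CARD('n) * (\<Prod>j\<in>UNIV. max 1 \<bar>real_of_int (q j)\<bar>))"
proof -
  define M :: nat where "M = nat \<lceil>1 / e\<rceil> + 1"
  have M1: "1 \<le> M" unfolding M_def by simp
  have Me: "1 / real M < e"
  proof -
    have "1 / e < real M" unfolding M_def by linarith
    then show ?thesis using e M1 by (simp add: field_simps)
  qed
  define K :: real where "K = real M ^ CARD('m)"
  define \<eta> :: real where "\<eta> = 1 / (real M * K)"
  have K1: "1 \<le> K" unfolding K_def using M1 by simp
  have Keta: "K * \<eta> = 1 / real M" unfolding \<eta>_def using K1 M1 by (simp add: field_simps)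
  have main: "\<exists>p' q'. q' \<noteq> (\<lambda>_. 0) \<and>
        (\<forall>i. \<bar>(\<Sum>j\<in>UNIV. Y $ i $ j * of_int (q' j)) - of_int (p' i)\<bar> < e \<and>
             \<bar>(\<Sum>j\<in>UNIV. Y $ i $ j * of_int (q' j)) - of_int (p' i)\<bar>
               \<le> K * \<bar>(\<Sum>j\<in>UNIV. Y $ i $ j * of_int (q j)) - of_int (p i)\<bar>) \<and>
        (\<Prod>j\<in>UNIV. max 1 \<bar>real_of_int (q' j)\<bar>) \<le> K ^ CARD('n) * (\<Prod>j\<in>UNIV. max 1 \<bar>real_of_int (q j)\<bar>)"
    if qnz: "q \<noteq> (\<lambda>_. 0)" for Y :: "real^'n::finite^'m::finite" and p q
  proof -
    define x where "x = (\<lambda>i. \<Sum>j\<in>UNIV. Y $ i $ j * of_int (q j))"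
    define f where "f = (\<lambda>i. \<bar>x i - of_int (p i)\<bar>)"
    obtain N :: nat where N: "1 \<le> N" "N \<le> M ^ CARD('m)" "\<forall>i. \<exists>p::int. \<bar>real N * x i - of_int p\<bar> < 1 / real M"
      using dirichlet[OF M1, of x] by blast
    obtain P where P: "\<And>i. \<bar>real N * x i - of_int (P i)\<bar> < 1 / real M" using N(3) by metis
    have NK: "real N \<le> K" unfolding K_def using N(2) by (metis of_nat_le_iff of_nat_power)
    define q' where "q' = (\<lambda>j. int N * q j)"
    define p' where "p' = (\<lambda>i. if f i < \<eta> then int N * p i else P i)"
    have xq': "(\<Sum>j\<in>UNIV. Y $ i $ j * of_int (q' j)) = real N * x i" for i
      unfolding q'_def x_def by (simp add: sum_distrib_left algebra_simps)
    have q'nz: "q' \<noteq> (\<lambda>_. 0)" using qnz N(1) unfolding q'_def by (auto simp: fun_eq_iff)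
    have fi: "\<bar>real N * x i - of_int (p' i)\<bar> < e \<and> \<bar>real N * x i - of_int (p' i)\<bar> \<le> K * f i" for i
    proof (cases "f i < \<eta>")
      case True
      have eq: "\<bar>real N * x i - of_int (p' i)\<bar> = real N * f i"
        unfolding p'_def using True by (simp add: f_def abs_mult right_diff_distrib[symmetric])
      have "real N * f i \<le> K * f i" using NK by (simp add: f_def mult_right_mono)
      moreover have "K * f i \<le> K * \<eta>" using True K1 by simp
      ultimately show ?thesis using eq Keta Me by linarith
    next
      case False
      have eq: "\<bar>real N * x i - of_int (p' i)\<bar> < 1 / real M" unfolding p'_def using False P by simp
      have "1 / real M \<le> K * f i" using False K1 Keta by (metis linorder_not_less mult_left_mono order_trans order_refl zero_le_one)
      then show ?thesis using eq Me by linarith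
    qed
    have "(\<Prod>j\<in>UNIV. max 1 \<bar>real_of_int (q' j)\<bar>) \<le> (\<Prod>j\<in>(UNIV::'n set). K * max 1 \<bar>real_of_int (q j)\<bar>)"
    proof (rule prod_mono)
      fix j
      have "max 1 \<bar>real_of_int (q' j)\<bar> \<le> real N * max 1 \<bar>real_of_int (q j)\<bar>"
      proof -
        have a: "\<bar>real_of_int (q' j)\<bar> = real N * \<bar>real_of_int (q j)\<bar>" by (simp add: q'_def abs_mult)
        have b: "1 \<le> real N * max 1 \<bar>real_of_int (q j)\<bar>"
          using N(1) by (metis max.cobounded1 mult_mono of_nat_1 of_nat_mono mult_1 zero_le_one of_nat_0_le_iff)
        have c: "real N * \<bar>real_of_int (q j)\<bar> \<le> real N * max 1 \<bar>real_of_int (q j)\<bar>"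
          by (intro mult_left_mono) auto
        show ?thesis unfolding a using b c by (rule max.boundedI)
      qed
      also have "\<dots> \<le> K * max 1 \<bar>real_of_int (q j)\<bar>" using NK by (simp add: mult_right_mono)
      finally show "0 \<le> max 1 \<bar>real_of_int (q' j)\<bar> \<and> max 1 \<bar>real_of_int (q' j)\<bar> \<le> K * max 1 \<bar>real_of_int (q j)\<bar>"
        by simp
    qed
    also have "\<dots> = K ^ CARD('n) * (\<Prod>j\<in>UNIV. max 1 \<bar>real_of_int (q j)\<bar>)"
      by (simp add: prod.distrib)
    finally have "(\<Prod>j\<in>UNIV. max 1 \<bar>real_of_int (q' j)\<bar>) \<le> K ^ CARD('n) * (\<Prod>j\<in>UNIV. max 1 \<bar>real_of_int (q j)\<bar>)" .
    moreover have "\<forall>i. \<bar>(\<Sum>j\<in>UNIV. Y $ i $ j * of_int (q' j)) - of_int (p' i)\<bar> < e \<and>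
             \<bar>(\<Sum>j\<in>UNIV. Y $ i $ j * of_int (q' j)) - of_int (p' i)\<bar>
               \<le> K * \<bar>(\<Sum>j\<in>UNIV. Y $ i $ j * of_int (q j)) - of_int (p i)\<bar>"
      using fi unfolding xq' f_def x_def by simp
    ultimately show ?thesis using q'nz by blast
  qed
  show ?thesis using K1 main by blast
qed


lemma S_times_iff: "Y \<in> S_times (\<lambda>x. c * psi1 x) T \<longleftrightarrow> (\<exists>p q. q \<noteq> (\<lambda>_. 0) \<and>
      (\<Prod>i\<in>UNIV. \<bar>(\<Sum>j\<in>UNIV. Y $ i $ j * of_int (q j)) - of_int (p i)\<bar>) < c / T \<and>
      (\<Prod>j\<in>UNIV. max 1 \<bar>real_of_int (q j)\<bar>) < T)"
  unfolding S_times_def psi1_def by simp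

lemma core_fwd:
  assumes eps: "0 < \<epsilon>"
  shows "\<exists>e K. 0 < e \<and> e \<le> \<epsilon> \<and> e \<le> 1 \<and> 1 \<le> K \<and>
    (\<forall>t T (Y::real^'n::finite^'m::finite). 0 < t \<longrightarrow> T = exp t * e ^ CARD('n) / K ^ CARD('n) \<longrightarrow>
        Y \<in> S_times (\<lambda>x. (e ^ (CARD('m) + CARD('n)) / K ^ (CARD('m) + CARD('n))) * psi1 x) T \<longrightarrow>
        (\<exists>a\<in>(C0 t :: (real^('m+'n)) set). delta (exp_act a ` lattice_xY Y) < \<epsilon>))"
proof -
  define e where "e = min \<epsilon> (1/2)"
  have e: "0 < e" "e \<le> \<epsilon>" "e \<le> 1" using eps unfolding e_def by auto
  obtain K where K: "1 \<le> K" and Kp: "\<forall>(Y::real^'n::finite^'m::finite) (p::'m \<Rightarrow> int) (q::'n \<Rightarrow> int). q \<noteq> (\<lambda>_. 0) \<longrightarrow>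
     (\<exists>p' q'. q' \<noteq> (\<lambda>_. 0) \<and>
        (\<forall>i. \<bar>(\<Sum>j\<in>UNIV. Y $ i $ j * of_int (q' j)) - of_int (p' i)\<bar> < e \<and>
             \<bar>(\<Sum>j\<in>UNIV. Y $ i $ j * of_int (q' j)) - of_int (p' i)\<bar>
               \<le> K * \<bar>(\<Sum>j\<in>UNIV. Y $ i $ j * of_int (q j)) - of_int (p i)\<bar>) \<and>
        (\<Prod>j\<in>UNIV. max 1 \<bar>real_of_int (q' j)\<bar>) \<le> K ^ CARD('n) * (\<Prod>j\<in>UNIV. max 1 \<bar>real_of_int (q j)\<bar>))"
    using improve_lem[OF e(1)] by blast
  let ?m = "CARD('m)" and ?n = "CARD('n)"
  define c where "c = e ^ (?m + ?n) / K ^ (?m + ?n)"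
  have "\<exists>a\<in>(C0 t :: (real^('m+'n)) set). delta (exp_act a ` lattice_xY Y) < \<epsilon>"
    if t: "0 < t" and T: "T = exp t * e ^ ?n / K ^ ?n" and S: "Y \<in> S_times (\<lambda>x. c * psi1 x) T"
    for t T and Y :: "real^'n::finite^'m::finite"
  proof -
    have Tpos: "0 < T" unfolding T using e K by simp
    obtain p q where pq: "q \<noteq> (\<lambda>_. 0)"
      "(\<Prod>i\<in>UNIV. \<bar>(\<Sum>j\<in>UNIV. Y $ i $ j * of_int (q j)) - of_int (p i)\<bar>) < c / T"
      "(\<Prod>j\<in>UNIV. max 1 \<bar>real_of_int (q j)\<bar>) < T"
      using S unfolding S_times_iff by blast
    obtain p' q' where pq': "q' \<noteq> (\<lambda>_. 0)"
      "\<And>i. \<bar>(\<Sum>j\<in>UNIV. Y $ i $ j * of_int (q' j)) - of_int (p' i)\<bar> < e"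
      "\<And>i. \<bar>(\<Sum>j\<in>UNIV. Y $ i $ j * of_int (q' j)) - of_int (p' i)\<bar>
               \<le> K * \<bar>(\<Sum>j\<in>UNIV. Y $ i $ j * of_int (q j)) - of_int (p i)\<bar>"
      "(\<Prod>j\<in>UNIV. max 1 \<bar>real_of_int (q' j)\<bar>) \<le> K ^ ?n * (\<Prod>j\<in>UNIV. max 1 \<bar>real_of_int (q j)\<bar>)"
      using Kp pq(1) by blast
    have Kn: "0 < K ^ ?n" "0 < K ^ ?m" using K by auto
    have Q': "(\<Prod>j\<in>UNIV. max 1 \<bar>real_of_int (q' j)\<bar>) < e ^ ?n * exp t"
    proof -
      have "K ^ ?n * (\<Prod>j\<in>UNIV. max 1 \<bar>real_of_int (q j)\<bar>) < K ^ ?n * T"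
        using pq(3) Kn by simp
      also have "\<dots> = e ^ ?n * exp t" unfolding T using Kn K by (simp add: field_simps)
      finally show ?thesis using pq'(4) by linarith
    qed
    have P': "(\<Prod>i\<in>UNIV. \<bar>(\<Sum>j\<in>UNIV. Y $ i $ j * of_int (q' j)) - of_int (p' i)\<bar>) * exp t < e ^ ?m"
    proof -
      have "(\<Prod>i\<in>UNIV. \<bar>(\<Sum>j\<in>UNIV. Y $ i $ j * of_int (q' j)) - of_int (p' i)\<bar>)
          \<le> (\<Prod>i\<in>(UNIV::'m set). K * \<bar>(\<Sum>j\<in>UNIV. Y $ i $ j * of_int (q j)) - of_int (p i)\<bar>)"
        by (rule prod_mono) (use pq'(3) in auto)
      also have "\<dots> = K ^ ?m * (\<Prod>i\<in>UNIV. \<bar>(\<Sum>j\<in>UNIV. Y $ i $ j * of_int (q j)) - of_int (p i)\<bar>)"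
        by (simp add: prod.distrib)
      also have "\<dots> < K ^ ?m * (c / T)" using pq(2) Kn by (intro mult_strict_left_mono) auto
      finally have A0: "(\<Prod>i\<in>UNIV. \<bar>(\<Sum>j\<in>UNIV. Y $ i $ j * of_int (q' j)) - of_int (p' i)\<bar>)
          < K ^ ?m * (c / T)" .
      have A: "(\<Prod>i\<in>UNIV. \<bar>(\<Sum>j\<in>UNIV. Y $ i $ j * of_int (q' j)) - of_int (p' i)\<bar>) * exp t
          < K ^ ?m * (c / T) * exp t" by (rule mult_strict_right_mono[OF A0]) simp
      have "K ^ ?m * (c / T) * exp t = e ^ ?m"
        unfolding T c_def using Kn e K by (simp add: field_simps power_add)
      then show ?thesis using A by simp
    qed
    obtain a where "a \<in> (C0 t :: (real^('m+'n)) set)" "delta (exp_act a ` lattice_xY Y) < e"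
      using construct_lem[OF e(1) e(3) t pq'(1) pq'(2) Q' P'] by blast
    then show ?thesis using e(2) by force
  qed
  then show ?thesis using e K unfolding c_def by blast
qed

lemma core_bwd:
  assumes c: "0 < c"
  shows "\<exists>e>0. e \<le> 1 \<and> (\<forall>t (a::real^('m::finite+'n::finite)) (Y::real^'n^'m). a \<in> C0 t \<longrightarrow>
     delta (exp_act a ` lattice_xY Y) < e \<longrightarrow> Y \<in> S_times (\<lambda>x. c * psi1 x) (exp t))"
proof -
  define e where "e = min (1/2) c"
  have e: "0 < e" "e \<le> 1" "e \<le> c" using c unfolding e_def by auto
  have em: "e ^ CARD('m) \<le> c"
  proof -
    have "e ^ CARD('m) \<le> e ^ 1" using e by (intro power_decreasing) auto
    then show ?thesis using e by simp
  qed
  have "Y \<in> S_times (\<lambda>x. c * psi1 x) (exp t)"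
    if a: "a \<in> C0 t" and d: "delta (exp_act a ` lattice_xY Y) < e"
    for t and a :: "real^('m::finite+'n::finite)" and Y :: "real^'n^'m"
  proof -
    obtain p q where pq: "q \<noteq> (\<lambda>_. 0)"
      "(\<Prod>i\<in>UNIV. \<bar>(\<Sum>j\<in>UNIV. Y $ i $ j * of_int (q j)) - of_int (p i)\<bar>) * exp t < e ^ CARD('m)"
      "(\<Prod>j\<in>UNIV. max 1 \<bar>real_of_int (q j)\<bar>) < exp t"
      using extract_lem[OF a e(1) e(2) d] by blast
    have "(\<Prod>i\<in>UNIV. \<bar>(\<Sum>j\<in>UNIV. Y $ i $ j * of_int (q j)) - of_int (p i)\<bar>) < c / exp t"
      using pq(2) em by (simp add: field_simps)
    then show ?thesis unfolding S_times_iff using pq by blast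
  qed
  then show ?thesis using e by blast
qed

theorem partA:
  fixes Y :: "real^'n::finite^'m::finite"
  shows "Y \<in> Sing_times \<longleftrightarrow>
           (\<forall>\<epsilon>>0. \<exists>t0>0. \<forall>t\<ge>t0. \<exists>a\<in>(C0 t :: (real^('m + 'n)) set).
              delta (exp_act a ` lattice_xY Y) < \<epsilon>)"
proof
  assume Y: "Y \<in> Sing_times"
  show "\<forall>\<epsilon>>0. \<exists>t0>0. \<forall>t\<ge>t0. \<exists>a\<in>(C0 t :: (real^('m + 'n)) set). delta (exp_act a ` lattice_xY Y) < \<epsilon>"
  proof (intro allI impI)
    fix \<epsilon> :: real assume eps: "0 < \<epsilon>"
    obtain e K where eK: "0 < e" "1 \<le> K" and
      H: "\<forall>t T (Y::real^'n::finite^'m::finite). 0 < t \<longrightarrow> T = exp t * e ^ CARD('n) / K ^ CARD('n) \<longrightarrow>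
        Y \<in> S_times (\<lambda>x. (e ^ (CARD('m) + CARD('n)) / K ^ (CARD('m) + CARD('n))) * psi1 x) T \<longrightarrow>
        (\<exists>a\<in>(C0 t :: (real^('m+'n)) set). delta (exp_act a ` lattice_xY Y) < \<epsilon>)"
      using core_fwd[OF eps] by blast
    define c where "c = e ^ (CARD('m) + CARD('n)) / K ^ (CARD('m) + CARD('n))"
    have "0 < c" unfolding c_def using eK by simp
    then obtain T0 where T0: "T0 > 1" "\<forall>T\<ge>T0. Y \<in> S_times (\<lambda>x. c * psi1 x) T"
      using Y unfolding Sing_times_def D_times_def by fastforce
    define t0 where "t0 = max 1 (ln (T0 * K ^ CARD('n) / e ^ CARD('n)))"
    have "\<exists>a\<in>(C0 t :: (real^('m + 'n)) set). delta (exp_act a ` lattice_xY Y) < \<epsilon>" if t: "t \<ge> t0" for t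
    proof -
      have t0': "0 < t" using t unfolding t0_def by linarith
      have "ln (T0 * K ^ CARD('n) / e ^ CARD('n)) \<le> t" using t unfolding t0_def by linarith
      moreover have "0 < T0 * K ^ CARD('n) / e ^ CARD('n)" using T0 eK by simp
      ultimately have "T0 * K ^ CARD('n) / e ^ CARD('n) \<le> exp t"
        by (metis exp_le_cancel_iff exp_ln_iff)
      then have "T0 \<le> exp t * e ^ CARD('n) / K ^ CARD('n)" using eK by (simp add: field_simps)
      then have "Y \<in> S_times (\<lambda>x. c * psi1 x) (exp t * e ^ CARD('n) / K ^ CARD('n))" using T0 by blast
      then show ?thesis using H t0' unfolding c_def by blast
    qed
    moreover have "t0 > 0" unfolding t0_def by simp
    ultimately show "\<exists>t0>0. \<forall>t\<ge>t0. \<exists>a\<in>(C0 t :: (real^('m + 'n)) set). delta (exp_act a ` lattice_xY Y) < \<epsilon>"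
      by blast
  qed
next
  assume R: "\<forall>\<epsilon>>0. \<exists>t0>0. \<forall>t\<ge>t0. \<exists>a\<in>(C0 t :: (real^('m + 'n)) set). delta (exp_act a ` lattice_xY Y) < \<epsilon>"
  have "Y \<in> D_times (\<lambda>x. c * psi1 x)" if c: "c > 0" for c
  proof -
    obtain e where e: "e > 0" and H: "\<forall>t (a::real^('m+'n)) (Y::real^'n^'m). a \<in> C0 t \<longrightarrow>
     delta (exp_act a ` lattice_xY Y) < e \<longrightarrow> Y \<in> S_times (\<lambda>x. c * psi1 x) (exp t)"
      using core_bwd[OF c] by blast
    obtain t0 where t0: "t0 > 0" "\<forall>t\<ge>t0. \<exists>a\<in>(C0 t :: (real^('m + 'n)) set). delta (exp_act a ` lattice_xY Y) < e"
      using R e by blast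
    define T0 where "T0 = max 2 (exp t0)"
    have "Y \<in> S_times (\<lambda>x. c * psi1 x) T" if T: "T \<ge> T0" for T
    proof -
      have Tp: "0 < T" using T unfolding T0_def by linarith
      have "t0 \<le> ln T" using T unfolding T0_def by (simp add: ln_ge_iff Tp)
      then obtain a where "a \<in> (C0 (ln T) :: (real^('m + 'n)) set)" "delta (exp_act a ` lattice_xY Y) < e"
        using t0 by blast
      then have "Y \<in> S_times (\<lambda>x. c * psi1 x) (exp (ln T))" using H by blast
      then show ?thesis using Tp by simp
    qed
    moreover have "T0 > 1" unfolding T0_def by simp
    ultimately show ?thesis unfolding D_times_def by auto
  qed
  then show "Y \<in> Sing_times" unfolding Sing_times_def by auto
qed

theorem partB:
  fixes Y :: "real^'n::finite^'m::finite"
  shows "Y \<in> WA_times \<longleftrightarrow>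
           (\<forall>\<epsilon>>0. \<forall>R. \<exists>t\<ge>R. t \<ge> 0 \<and> (\<exists>a\<in>(C0 t :: (real^('m + 'n)) set).
              delta (exp_act a ` lattice_xY Y) < \<epsilon>))"
proof
  assume Y: "Y \<in> WA_times"
  show "\<forall>\<epsilon>>0. \<forall>R. \<exists>t\<ge>R. t \<ge> 0 \<and> (\<exists>a\<in>(C0 t :: (real^('m + 'n)) set). delta (exp_act a ` lattice_xY Y) < \<epsilon>)"
  proof (intro allI impI)
    fix \<epsilon> R :: real assume eps: "0 < \<epsilon>"
    obtain e K where eK: "0 < e" "1 \<le> K" and
      H: "\<forall>t T (Y::real^'n::finite^'m::finite). 0 < t \<longrightarrow> T = exp t * e ^ CARD('n) / K ^ CARD('n) \<longrightarrow>
        Y \<in> S_times (\<lambda>x. (e ^ (CARD('m) + CARD('n)) / K ^ (CARD('m) + CARD('n))) * psi1 x) T \<longrightarrow>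
        (\<exists>a\<in>(C0 t :: (real^('m+'n)) set). delta (exp_act a ` lattice_xY Y) < \<epsilon>)"
      using core_fwd[OF eps] by blast
    define c where "c = e ^ (CARD('m) + CARD('n)) / K ^ (CARD('m) + CARD('n))"
    have "0 < c" unfolding c_def using eK by simp
    then have W: "\<forall>R. \<exists>T\<ge>R. T > 1 \<and> Y \<in> S_times (\<lambda>x. c * psi1 x) T"
      using Y unfolding WA_times_def W_times_def by auto
    define R' where "R' = exp (max R 1) * e ^ CARD('n) / K ^ CARD('n)"
    obtain T where T: "T \<ge> R'" "T > 1" "Y \<in> S_times (\<lambda>x. c * psi1 x) T" using W by blast
    define t where "t = ln (T * K ^ CARD('n) / e ^ CARD('n))"
    have pos: "0 < T * K ^ CARD('n) / e ^ CARD('n)" using T eK by simp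
    have "exp (max R 1) \<le> T * K ^ CARD('n) / e ^ CARD('n)" using T(1) eK unfolding R'_def by (simp add: field_simps)
    then have tR: "max R 1 \<le> t" unfolding t_def using pos ln_ge_iff by blast
    have Teq: "T = exp t * e ^ CARD('n) / K ^ CARD('n)" unfolding t_def using pos eK by simp
    have "\<exists>a\<in>(C0 t :: (real^('m+'n)) set). delta (exp_act a ` lattice_xY Y) < \<epsilon>"
    proof -
      have "0 < t" using tR by linarith
      then show ?thesis using H Teq T(3) unfolding c_def by blast
    qed
    then show "\<exists>t\<ge>R. t \<ge> 0 \<and> (\<exists>a\<in>(C0 t :: (real^('m + 'n)) set). delta (exp_act a ` lattice_xY Y) < \<epsilon>)"
      using tR by (intro exI[of _ t]) auto
  qed
next
  assume Rh: "\<forall>\<epsilon>>0. \<forall>R. \<exists>t\<ge>R. t \<ge> 0 \<and> (\<exists>a\<in>(C0 t :: (real^('m + 'n)) set). delta (exp_act a ` lattice_xY Y) < \<epsilon>)"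
  have "Y \<in> W_times (\<lambda>x. c * psi1 x)" if c: "c > 0" for c
  proof -
    obtain e where e: "e > 0" and H: "\<forall>t (a::real^('m+'n)) (Y::real^'n^'m). a \<in> C0 t \<longrightarrow>
     delta (exp_act a ` lattice_xY Y) < e \<longrightarrow> Y \<in> S_times (\<lambda>x. c * psi1 x) (exp t)"
      using core_bwd[OF c] by blast
    have "\<exists>T\<ge>R. T > 1 \<and> Y \<in> S_times (\<lambda>x. c * psi1 x) T" for R
    proof -
      obtain t a where t: "t \<ge> max R 1" "a \<in> (C0 t :: (real^('m + 'n)) set)" "delta (exp_act a ` lattice_xY Y) < e"
        using Rh e by blast
      have "Y \<in> S_times (\<lambda>x. c * psi1 x) (exp t)" using H t by blast
      moreover have "exp t \<ge> R" using t(1) exp_ge_add_one_self[of t] by linarith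
      moreover have "exp t > 1" using t(1) by simp
      ultimately show ?thesis by blast
    qed
    then show ?thesis unfolding W_times_def by blast
  qed
  then show "Y \<in> WA_times" unfolding WA_times_def by auto
qed


definition zsp :: "nat \<Rightarrow> (nat \<Rightarrow> 'a::real_vector) \<Rightarrow> 'a set" where
  "zsp r b = {\<Sum>i<r. of_int (z i) *\<^sub>R b i | z :: nat \<Rightarrow> int. True}"

lemma zsp_0: "0 \<in> zsp r b"
  unfolding zsp_def by (auto intro!: exI[of _ "\<lambda>_. 0"])

lemma zsp_add: assumes "x \<in> zsp r b" "y \<in> zsp r b" shows "x + y \<in> zsp r b"
proof -
  obtain z where z: "x = (\<Sum>i<r. of_int (z i) *\<^sub>R b i)" using assms(1) unfolding zsp_def by blast
  obtain z' where z': "y = (\<Sum>i<r. of_int (z' i) *\<^sub>R b i)" using assms(2) unfolding zsp_def by blast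
  have "x + y = (\<Sum>i<r. of_int (z i + z' i) *\<^sub>R b i)"
    unfolding z z' by (simp add: sum.distrib[symmetric] scaleR_add_left)
  then show ?thesis unfolding zsp_def by (auto intro!: exI[of _ "\<lambda>i. z i + z' i"])
qed

lemma zsp_scale: assumes "x \<in> zsp r b" shows "of_int n *\<^sub>R x \<in> zsp r b"
proof -
  obtain z where z: "x = (\<Sum>i<r. of_int (z i) *\<^sub>R b i)" using assms(1) unfolding zsp_def by blast
  have "of_int n *\<^sub>R x = (\<Sum>i<r. of_int (n * z i) *\<^sub>R b i)"
    unfolding z by (simp add: scaleR_sum_right)
  then show ?thesis unfolding zsp_def by (auto intro!: exI[of _ "\<lambda>i. n * z i"])
qed

lemma zsp_neg: "x \<in> zsp r b \<Longrightarrow> - x \<in> zsp r b"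
  using zsp_scale[of x r b "-1"] by simp

lemma zsp_diff: "x \<in> zsp r b \<Longrightarrow> y \<in> zsp r b \<Longrightarrow> x - y \<in> zsp r b"
  using zsp_add[of x r b "-y"] zsp_neg[of y r b] by simp

lemma zsp_base: "i < r \<Longrightarrow> b i \<in> zsp r b"
  unfolding zsp_def
  by (rule CollectI, rule exI[of _ "\<lambda>j. if j = i then 1 else 0"])
     (simp add: if_distrib[of "\<lambda>x. of_int x *\<^sub>R _"] sum.delta cong: if_cong)

lemma zsp_sum_mem: fixes s :: nat assumes "\<And>i. i < s \<Longrightarrow> b' i \<in> zsp r b" shows "(\<Sum>i<s. of_int (z i) *\<^sub>R b' i) \<in> zsp r b"
  using assms
proof (induction s)
  case 0 then show ?case by (simp add: zsp_0)
next
  case (Suc s)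
  then show ?case by (simp add: zsp_add zsp_scale)
qed

lemma zsp_subset: "(\<And>i. i < (s::nat) \<Longrightarrow> b' i \<in> zsp r b) \<Longrightarrow> zsp s b' \<subseteq> zsp r b"
  using zsp_sum_mem unfolding zsp_def[of s b'] by blast

lemma zsp_eqI: "(\<And>i. i < r \<Longrightarrow> b' i \<in> zsp r b) \<Longrightarrow> (\<And>i. i < r \<Longrightarrow> b i \<in> zsp r b') \<Longrightarrow> zsp r b' = zsp r b"
  using zsp_subset by (metis subset_antisym)

definition hgt :: "(nat \<Rightarrow> 'a::euclidean_space) \<Rightarrow> nat \<Rightarrow> real" where
  "hgt b i = infdist (b i) (span (b ` {..<i}))"

lemma infdist_decomp:
  fixes x :: "'a::euclidean_space"
  assumes "x = y + w" "y \<in> span S" "\<And>v. v \<in> span S \<Longrightarrow> orthogonal w v"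
  shows "infdist x (span S) = norm w"
proof (rule antisym)
  show "infdist x (span S) \<le> norm w"
    using infdist_le[OF assms(2), of x] assms(1) by (simp add: dist_norm)
  have ne: "span S \<noteq> {}" using span_zero by blast
  show "norm w \<le> infdist x (span S)"
    unfolding infdist_notempty[OF ne]
  proof (rule cINF_greatest[OF ne])
    fix v assume v: "v \<in> span S"
    have "y - v \<in> span S" using v assms(2) span_diff by blast
    then have o: "orthogonal w (y - v)" using assms(3) by blast
    have "x - v = w + (y - v)" using assms(1) by simp
    then have "dist x v = norm (w + (y - v))" by (metis dist_norm)
    then have "(dist x v)\<^sup>2 = (norm w)\<^sup>2 + (norm (y - v))\<^sup>2"
      using norm_add_Pythagorean[OF o] by simp
    then have "(norm w)\<^sup>2 \<le> (dist x v)\<^sup>2" by simp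
    then show "norm w \<le> dist x v" by (metis power2_le_imp_le zero_le_dist)
  qed
qed

lemma decomp_exists:
  fixes x :: "'a::euclidean_space"
  obtains y w where "x = y + w" "y \<in> span S" "\<And>v. v \<in> span S \<Longrightarrow> orthogonal w v"
  using orthogonal_subspace_decomp_exists[of S x] by metis

lemma hgt_nonneg: "0 \<le> hgt b i"
  unfolding hgt_def by (rule infdist_nonneg)

lemma span_prefix_repr:
  fixes b :: "nat \<Rightarrow> 'a::real_vector"
  shows "y \<in> span (b ` {..<r}) \<Longrightarrow> \<exists>x. y = (\<Sum>l<r. x l *\<^sub>R b l)"
proof (induction r arbitrary: y)
  case 0 then show ?case by simp
next
  case (Suc r)
  have "b ` {..<Suc r} = insert (b r) (b ` {..<r})" by (auto simp: lessThan_Suc)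
  then obtain c where "y - c *\<^sub>R b r \<in> span (b ` {..<r})" using Suc.prems span_breakdown_eq by metis
  then obtain x where x: "y - c *\<^sub>R b r = (\<Sum>l<r. x l *\<^sub>R b l)" using Suc.IH by blast
  have "(\<Sum>l<r. (x(r := c)) l *\<^sub>R b l) = (\<Sum>l<r. x l *\<^sub>R b l)" by (intro sum.cong) auto
  then have "y = (\<Sum>l<Suc r. (x(r := c)) l *\<^sub>R b l)" using x by (simp add: algebra_simps)
  then show ?case by blast
qed

lemma hgt_translate:
  fixes b :: "nat \<Rightarrow> 'a::euclidean_space"
  assumes "b' j = b j + v" "v \<in> span (b ` {..<j})" "span (b' ` {..<j}) = span (b ` {..<j})"
  shows "hgt b' j = hgt b j"
proof -
  obtain y w where d: "b j = y + w" "y \<in> span (b ` {..<j})" "\<And>u. u \<in> span (b ` {..<j}) \<Longrightarrow> orthogonal w u"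
    using decomp_exists by blast
  have "hgt b j = norm w" unfolding hgt_def using infdist_decomp[OF d] .
  moreover have "hgt b' j = norm w" unfolding hgt_def assms(3)
    by (rule infdist_decomp[of _ "y + v"]) (use d assms(1,2) span_add in auto)
  ultimately show ?thesis by simp
qed

lemma hgt_cong:
  assumes "\<And>l. l \<le> j \<Longrightarrow> b' l = b l"
  shows "hgt b' j = hgt b j"
proof -
  have "b' ` {..<j} = b ` {..<j}" using assms by auto
  then show ?thesis unfolding hgt_def using assms by simp
qed


definition matb :: "(nat \<Rightarrow> 'k::finite) \<Rightarrow> (nat \<Rightarrow> real^'k) \<Rightarrow> real^'k^'k" where
  "matb e b = (\<chi> r c. b (inv_into {..<CARD('k)} e c) $ r)"

locale enum_k =
  fixes e :: "nat \<Rightarrow> 'k::finite"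
  assumes bij: "bij_betw e {..<CARD('k)} (UNIV::'k set)"
begin

abbreviation "ie \<equiv> inv_into {..<CARD('k)} e"

lemma surj_e: "c \<in> e ` {..<CARD('k)}"
  using bij_betw_imp_surj_on[OF bij] by simp

lemma ie_lt: "ie c < CARD('k)"
  using inv_into_into[OF surj_e[of c]] by simp

lemma e_ie: "e (ie c) = c"
  by (rule f_inv_into_f[OF surj_e])

lemma ie_e: "i < CARD('k) \<Longrightarrow> ie (e i) = i"
  by (rule inv_into_f_f[OF bij_betw_imp_inj_on[OF bij]]) simp

lemma e_inj: "i < CARD('k) \<Longrightarrow> j < CARD('k) \<Longrightarrow> e i = e j \<Longrightarrow> i = j"
  using ie_e by metis

lemma sum_reindex_e: "(\<Sum>c\<in>(UNIV::'k set). f c) = (\<Sum>i<CARD('k). f (e i))"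
  using sum.reindex_bij_betw[OF bij, of f] by simp

lemma prod_reindex_e: "(\<Prod>c\<in>(UNIV::'k set). f c) = (\<Prod>i<CARD('k). f (e i))"
  using prod.reindex_bij_betw[OF bij, of f] by simp

lemma matb_nth: "matb e b $ r $ c = b (ie c) $ r"
  unfolding matb_def by simp

lemma matb_cong: "(\<And>i. i < CARD('k) \<Longrightarrow> b i = b' i) \<Longrightarrow> matb e b = matb e b'"
  unfolding matb_def using ie_lt by (simp add: vec_eq_iff)

lemma matb_mulv: "matb e b *v z = (\<Sum>i<CARD('k). (z $ e i) *\<^sub>R b i)"
proof -
  have "(matb e b *v z) $ r = (\<Sum>i<CARD('k). (z $ e i) *\<^sub>R b i) $ r" for r
  proof -
    have "(matb e b *v z) $ r = (\<Sum>c\<in>UNIV. b (ie c) $ r * z $ c)"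
      by (simp add: matrix_vector_mult_def matb_nth)
    also have "\<dots> = (\<Sum>i<CARD('k). b (ie (e i)) $ r * z $ e i)" by (rule sum_reindex_e)
    also have "\<dots> = (\<Sum>i<CARD('k). b i $ r * z $ e i)" by (intro sum.cong) (auto simp: ie_e)
    also have "\<dots> = (\<Sum>i<CARD('k). (z $ e i) *\<^sub>R b i) $ r" by (simp add: sum_component mult.commute)
    finally show ?thesis .
  qed
  then show ?thesis by (simp add: vec_eq_iff)
qed

lemma lattice_of_matb: "lattice_of (matb e b) = zsp CARD('k) b"
proof (intro set_eqI iffI)
  fix v assume "v \<in> lattice_of (matb e b)"
  then obtain z where z: "z \<in> int_vectors" "v = matb e b *v z" unfolding lattice_of_def by auto
  have zi: "z $ c = of_int \<lfloor>z $ c\<rfloor>" for c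
  proof -
    from z(1) have "z $ c \<in> \<int>" unfolding int_vectors_def by blast
    then obtain n where "z $ c = of_int n" by (rule Ints_cases)
    then show ?thesis by simp
  qed
  have "v = (\<Sum>i<CARD('k). of_int (\<lfloor>z $ e i\<rfloor>) *\<^sub>R b i)"
    unfolding z(2) matb_mulv
  proof (intro sum.cong refl)
    fix i show "z $ e i *\<^sub>R b i = of_int (\<lfloor>z $ e i\<rfloor>) *\<^sub>R b i" using zi[of "e i"] by simp
  qed
  then show "v \<in> zsp CARD('k) b" unfolding zsp_def by (auto intro!: exI[of _ "\<lambda>i. \<lfloor>z $ e i\<rfloor>"])
next
  fix v assume "v \<in> zsp CARD('k) b"
  then obtain z where z: "v = (\<Sum>i<CARD('k). of_int (z i) *\<^sub>R b i)" unfolding zsp_def by blast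
  define zz :: "real^'k" where "zz = (\<chi> c. of_int (z (ie c)))"
  have "zz \<in> int_vectors" unfolding int_vectors_def zz_def by simp
  moreover have "matb e b *v zz = v" unfolding matb_mulv z zz_def
    by (intro sum.cong) (auto simp: ie_e)
  ultimately show "v \<in> lattice_of (matb e b)" unfolding lattice_of_def by (intro image_eqI[of _ _ zz]) auto
qed

lemma det_Ints: "(\<And>i j. (G::real^'n::finite^'n) $ i $ j \<in> \<int>) \<Longrightarrow> det G \<in> \<int>"
  unfolding det_def by (intro Ints_sum Ints_mult Ints_prod) auto

lemma matb_mult_exists:
  assumes "\<And>i. i < CARD('k) \<Longrightarrow> b' i \<in> zsp CARD('k) b"
  shows "\<exists>G. (\<forall>i j. G $ i $ j \<in> \<int>) \<and> matb e b' = matb e b ** G"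
proof -
  have "\<forall>i. \<exists>z. i < CARD('k) \<longrightarrow> b' i = (\<Sum>l<CARD('k). of_int (z l) *\<^sub>R b l)"
    using assms unfolding zsp_def by blast
  then obtain Z where Z: "\<And>i. i < CARD('k) \<Longrightarrow> b' i = (\<Sum>l<CARD('k). of_int (Z i l) *\<^sub>R b l)"
    by metis
  define G :: "real^'k^'k" where "G = (\<chi> c' c. of_int (Z (ie c) (ie c')))"
  have "(matb e b ** G) $ r $ c = matb e b' $ r $ c" for r c
  proof -
    have "(matb e b ** G) $ r $ c = (\<Sum>c'\<in>UNIV. b (ie c') $ r * of_int (Z (ie c) (ie c')))"
      by (simp add: matrix_matrix_mult_def matb_nth G_def)
    also have "\<dots> = (\<Sum>l<CARD('k). b (ie (e l)) $ r * of_int (Z (ie c) (ie (e l))))" by (rule sum_reindex_e)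
    also have "\<dots> = (\<Sum>l<CARD('k). b l $ r * of_int (Z (ie c) l))" by (intro sum.cong) (auto simp: ie_e)
    also have "\<dots> = b' (ie c) $ r" unfolding Z[OF ie_lt] by (simp add: sum_component mult.commute)
    finally show ?thesis by (simp add: matb_nth)
  qed
  then have "matb e b' = matb e b ** G" by (simp add: vec_eq_iff)
  moreover have "\<forall>i j. G $ i $ j \<in> \<int>" unfolding G_def by simp
  ultimately show ?thesis by blast
qed

lemma det_unimod:
  assumes eq: "zsp CARD('k) b' = zsp CARD('k) b" and nz: "det (matb e b) \<noteq> 0"
  shows "\<bar>det (matb e b')\<bar> = \<bar>det (matb e b)\<bar>"
proof -
  obtain G where G: "\<forall>i j. G $ i $ j \<in> \<int>" "matb e b' = matb e b ** G"
    using matb_mult_exists[of b' b] zsp_base[of _ "CARD('k)" b'] eq by blast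
  obtain H where H: "\<forall>i j. H $ i $ j \<in> \<int>" "matb e b = matb e b' ** H"
    using matb_mult_exists[of b b'] zsp_base[of _ "CARD('k)" b] eq by blast
  have "det (matb e b) = det (matb e b) * (det G * det H)"
    using G(2) H(2) by (metis det_mul mult.assoc)
  then have GH: "det G * det H = 1" using nz by simp
  obtain g h where gh: "det G = of_int g" "det H = of_int h"
    using det_Ints[of G] det_Ints[of H] G(1) H(1) by (metis Ints_cases)
  have "g * h = 1" using GH gh by (metis of_int_eq_1_iff of_int_mult)
  then have "\<bar>g\<bar> = 1" using abs_zmult_eq_1 by (metis abs_one)
  then have "\<bar>det G\<bar> = 1" using gh by simp
  then show ?thesis using G(2) by (simp add: det_mul abs_mult)
qed

end


context enum_k begin

lemma transpose_matb: "transpose (matb e b) = (\<chi> c. b (ie c))"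
  by (simp add: transpose_def matb_nth vec_eq_iff)

lemma det_hgt: "\<bar>det (matb e b)\<bar> = (\<Prod>i<CARD('k). hgt b i)"
proof -
  let ?k = "CARD('k)"
  have ex: "\<forall>i. \<exists>w. \<exists>y. b i = y + w \<and> y \<in> span (b ` {..<i}) \<and> (\<forall>v\<in>span (b ` {..<i}). orthogonal w v)"
  proof
    fix i
    obtain y w where "b i = y + w" "y \<in> span (b ` {..<i})" "\<And>v. v \<in> span (b ` {..<i}) \<Longrightarrow> orthogonal w v"
      using decomp_exists[where x="b i" and S="b ` {..<i}"] by blast
    then show "\<exists>w y. b i = y + w \<and> y \<in> span (b ` {..<i}) \<and> (\<forall>v\<in>span (b ` {..<i}). orthogonal w v)" by blast
  qed
  from choice[OF ex] obtain wf where wf: "\<And>i. \<exists>y. b i = y + wf i \<and> y \<in> span (b ` {..<i}) \<and> (\<forall>v\<in>span (b ` {..<i}). orthogonal (wf i) v)"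
    by blast
  have hw: "hgt b i = norm (wf i)" for i
  proof -
    obtain y where y: "b i = y + wf i" "y \<in> span (b ` {..<i})" "\<And>v. v\<in>span (b ` {..<i}) \<Longrightarrow> orthogonal (wf i) v"
      using wf[of i] by blast
    show ?thesis unfolding hgt_def by (rule infdist_decomp[OF y])
  qed
  have ydef: "b i - wf i \<in> span (b ` {..<i})" for i
  proof -
    obtain y where y: "b i = y + wf i" "y \<in> span (b ` {..<i})" using wf[of i] by blast
    then show ?thesis by simp
  qed
  have wspan: "wf j \<in> span (b ` {..<i})" if "j < i" for i j
  proof -
    have "b j \<in> span (b ` {..<i})" using that by (intro span_base) auto
    moreover have "b j - wf j \<in> span (b ` {..<i})"
    proof -
      have "b ` {..<j} \<subseteq> b ` {..<i}" using that by auto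
      then have "span (b ` {..<j}) \<subseteq> span (b ` {..<i})" by (rule span_mono)
      then show ?thesis using ydef[of j] by blast
    qed
    ultimately have "b j - (b j - wf j) \<in> span (b ` {..<i})" by (rule span_diff)
    then show ?thesis by simp
  qed
  have orth: "inner (wf i) (wf j) = 0" if "i \<noteq> j" for i j
  proof (cases "j < i")
    case True
    then show ?thesis using wf[of i] wspan[OF True] unfolding orthogonal_def by blast
  next
    case False
    then have "i < j" using that by simp
    then have "inner (wf j) (wf i) = 0" using wf[of j] wspan[of i j] unfolding orthogonal_def by blast
    then show ?thesis by (simp add: inner_commute)
  qed
  define mix where "mix = (\<lambda>r i. if i < r then b i else wf i)"
  have step: "det (matb e (mix r)) = det (matb e (mix (Suc r)))" if r: "r < ?k" for r
  proof -
    define A where "A = transpose (matb e (mix (Suc r)))"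
    have rowA: "row c A = mix (Suc r) (ie c)" for c
      unfolding A_def transpose_matb row_def by simp
    have "b ` {..<r} \<subseteq> {row j A |j. j \<noteq> e r}"
    proof
      fix x assume "x \<in> b ` {..<r}"
      then obtain l where l: "l < r" "x = b l" by auto
      have "row (e l) A = b l" unfolding rowA using l r by (simp add: ie_e mix_def)
      moreover have "e l \<noteq> e r" using l r e_inj by (metis less_trans order.irrefl)
      ultimately show "x \<in> {row j A |j. j \<noteq> e r}" using l by (metis (mono_tags, lifting) mem_Collect_eq)
    qed
    then have "span (b ` {..<r}) \<subseteq> span {row j A |j. j \<noteq> e r}" by (rule span_mono)
    then have sp: "- (b r - wf r) \<in> vec.span {row j A |j. j \<noteq> e r}"
    proof -
      have "b r - wf r \<in> span {row j A |j. j \<noteq> e r}" using ydef[of r] \<open>span (b ` {..<r}) \<subseteq> _\<close> by blast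
      then have "- (b r - wf r) \<in> span {row j A |j. j \<noteq> e r}" by (rule span_neg)
      then show ?thesis by (simp only: span_vec_eq)
    qed
    have eq: "transpose (matb e (mix r)) = (\<chi> c. if c = e r then row c A + - (b r - wf r) else row c A)"
    proof -
      have "mix r (ie c) = (if c = e r then row c A + - (b r - wf r) else row c A)" for c
      proof (cases "c = e r")
        case True
        then have "ie c = r" using ie_e r by simp
        then show ?thesis using True unfolding rowA mix_def by simp
      next
        case False
        then have "ie c \<noteq> r" using e_ie by metis
        then show ?thesis using False unfolding rowA mix_def by auto
      qed
      then show ?thesis unfolding transpose_matb by (simp add: vec_eq_iff)
    qed
    have "det (transpose (matb e (mix r))) = det A"
      unfolding eq using det_row_span[OF sp] by (simp cong: if_cong)
    then show ?thesis unfolding A_def by simp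
  qed
  have down: "d \<le> ?k \<Longrightarrow> det (matb e (mix (?k - d))) = det (matb e b)" for d
  proof (induction d)
    case 0
    have "matb e (mix ?k) = matb e b" by (rule matb_cong) (simp add: mix_def)
    then show ?case by simp
  next
    case (Suc d)
    have "det (matb e (mix (?k - Suc d))) = det (matb e (mix (Suc (?k - Suc d))))"
      using Suc.prems by (intro step) simp
    also have "Suc (?k - Suc d) = ?k - d" using Suc.prems by simp
    finally show ?case using Suc by simp
  qed
  have "mix 0 = wf" unfolding mix_def by auto
  then have detW: "det (matb e wf) = det (matb e b)" using down[of ?k] by simp
  let ?M = "matb e wf"
  have gram: "transpose ?M ** ?M = (\<chi> c c'. if c = c' then (norm (wf (ie c)))\<^sup>2 else 0)"
  proof -
    have "(transpose ?M ** ?M) $ c $ c' = inner (wf (ie c)) (wf (ie c'))" for c c'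
      by (simp add: matrix_matrix_mult_def transpose_def matb_nth inner_vec_def)
    moreover have "inner (wf (ie c)) (wf (ie c')) = (if c = c' then (norm (wf (ie c)))\<^sup>2 else 0)" for c c'
    proof (cases "c = c'")
      case True then show ?thesis by (simp add: power2_norm_eq_inner)
    next
      case False
      then have "ie c \<noteq> ie c'" using e_ie by metis
      then show ?thesis using orth False by simp
    qed
    ultimately show ?thesis by (simp add: vec_eq_iff)
  qed
  have "(det ?M)\<^sup>2 = det (transpose ?M ** ?M)" by (simp add: det_mul power2_eq_square)
  also have "\<dots> = (\<Prod>c\<in>UNIV. (norm (wf (ie c)))\<^sup>2)" unfolding gram by (subst det_diagonal) auto
  also have "\<dots> = (\<Prod>i<?k. (norm (wf (ie (e i))))\<^sup>2)" by (rule prod_reindex_e)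
  also have "\<dots> = (\<Prod>i<?k. (norm (wf i))\<^sup>2)" by (intro prod.cong) (auto simp: ie_e)
  also have "\<dots> = (\<Prod>i<?k. hgt b i)\<^sup>2" by (simp add: hw prod_power_distrib)
  finally have "\<bar>det ?M\<bar>\<^sup>2 = (\<Prod>i<?k. hgt b i)\<^sup>2" by simp
  then have "\<bar>det ?M\<bar> = (\<Prod>i<?k. hgt b i)"
    by (rule power2_eq_imp_eq) (auto intro: prod_nonneg hgt_nonneg)
  then show ?thesis using detW by simp
qed

end


lemma move_lem:
  fixes b :: "nat \<Rightarrow> 'a::euclidean_space"
  assumes i: "Suc i < n" and small: "hgt b (Suc i) < hgt b i / 2"
  shows "\<exists>b'. zsp n b' = zsp n b \<and> (\<forall>j<i. hgt b' j = hgt b j) \<and> hgt b' i < hgt b i \<and>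
     hgt b' (Suc i) \<le> hgt b i \<and> (\<forall>j>Suc i. hgt b' j = hgt b j)"
proof -
  define S0 where "S0 = b ` {..<i}"
  have S1: "b ` {..<Suc i} = insert (b i) S0" unfolding S0_def by (auto simp: lessThan_Suc)
  obtain u w where uw: "b (Suc i) = u + w" "u \<in> span (b ` {..<Suc i})"
      "\<And>x. x \<in> span (b ` {..<Suc i}) \<Longrightarrow> orthogonal w x"
    using decomp_exists[where x="b (Suc i)" and S="b ` {..<Suc i}"] by blast
  have hw: "hgt b (Suc i) = norm w" unfolding hgt_def by (rule infdist_decomp[OF uw])
  obtain s where s: "u - s *\<^sub>R b i \<in> span S0" using uw(2) unfolding S1 span_breakdown_eq by blast
  define v where "v = u - s *\<^sub>R b i"
  obtain v' r where vr: "b i = v' + r" "v' \<in> span S0" "\<And>x. x \<in> span S0 \<Longrightarrow> orthogonal r x"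
    using decomp_exists[where x="b i" and S="S0"] by blast
  have hr: "hgt b i = norm r" unfolding hgt_def S0_def[symmetric] by (rule infdist_decomp[OF vr])
  define n0 where "n0 = round s"
  have sn: "\<bar>s - of_int n0\<bar> \<le> 1/2" unfolding n0_def using of_int_round_abs_le[of s] by linarith
  define b' where "b' = b(i := b (Suc i) - of_int n0 *\<^sub>R b i, Suc i := b i)"
  have b'i: "b' i = b (Suc i) - of_int n0 *\<^sub>R b i" unfolding b'_def by simp
  have b'Si: "b' (Suc i) = b i" unfolding b'_def by simp
  have b'o: "b' l = b l" if "l \<noteq> i" "l \<noteq> Suc i" for l unfolding b'_def using that by simp
  have S0': "b' ` {..<i} = S0" unfolding S0_def using b'o by auto
  have h1: "\<forall>j<i. hgt b' j = hgt b j" by (auto intro!: hgt_cong b'o)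
  have "hgt b' i \<le> dist (b' i) (v + (s - of_int n0) *\<^sub>R v')"
    unfolding hgt_def S0' by (rule infdist_le) (use s vr(2) in \<open>auto simp: v_def intro: span_add span_scale\<close>)
  also have "b' i - (v + (s - of_int n0) *\<^sub>R v') = (s - of_int n0) *\<^sub>R r + w"
  proof -
    have "b' i = (v + s *\<^sub>R b i) + w - of_int n0 *\<^sub>R b i" unfolding b'i uw(1) v_def by simp
    also have "\<dots> = v + (s - of_int n0) *\<^sub>R (v' + r) + w" using vr(1) by (simp add: algebra_simps)
    finally show ?thesis by (simp add: algebra_simps)
  qed
  then have "dist (b' i) (v + (s - of_int n0) *\<^sub>R v') = norm ((s - of_int n0) *\<^sub>R r + w)"
    by (simp add: dist_norm)
  also have "\<dots> \<le> \<bar>s - of_int n0\<bar> * norm r + norm w" by (rule order_trans[OF norm_triangle_ineq]) simp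
  also have "\<dots> \<le> 1/2 * norm r + norm w" using sn by (intro add_right_mono mult_right_mono) auto
  also have "\<dots> < hgt b i" using small hw hr by simp
  finally have h2: "hgt b' i < hgt b i" .
  have "span S0 \<subseteq> span (b' ` {..<Suc i})" unfolding S0'[symmetric] by (intro span_mono) auto
  then have "hgt b' (Suc i) \<le> dist (b i) v'"
    unfolding hgt_def b'Si using vr(2) by (intro infdist_le) blast
  also have "\<dots> = hgt b i" unfolding hr using vr(1) by (simp add: dist_norm)
  finally have h3: "hgt b' (Suc i) \<le> hgt b i" .
  have h4: "hgt b' j = hgt b j" if j: "j > Suc i" for j
  proof -
    have ij: "i \<in> {..<j}" "Suc i \<in> {..<j}" using j by auto
    have A: "b' ` {..<j} \<subseteq> span (b ` {..<j})"
    proof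
      fix x assume "x \<in> b' ` {..<j}"
      then obtain l where l: "l < j" "x = b' l" by auto
      show "x \<in> span (b ` {..<j})"
      proof (cases "l = i \<or> l = Suc i")
        case True
        have m: "b i \<in> span (b ` {..<j})" "b (Suc i) \<in> span (b ` {..<j})" using ij by (auto intro: span_base)
        have "b (Suc i) - of_int n0 *\<^sub>R b i \<in> span (b ` {..<j})" using m by (intro span_diff span_scale)
        then show ?thesis using True l m by (auto simp: b'i b'Si)
      next
        case False
        then show ?thesis using l b'o by (auto intro: span_base)
      qed
    qed
    have B: "b ` {..<j} \<subseteq> span (b' ` {..<j})"
    proof
      fix x assume "x \<in> b ` {..<j}"
      then obtain l where l: "l < j" "x = b l" by auto
      show "x \<in> span (b' ` {..<j})"
      proof (cases "l = i \<or> l = Suc i")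
        case True
        have e: "b (Suc i) = b' i + of_int n0 *\<^sub>R b' (Suc i)" by (simp add: b'i b'Si)
        have m: "b' i \<in> span (b' ` {..<j})" "b' (Suc i) \<in> span (b' ` {..<j})" using ij by (auto intro: span_base)
        have "b' i + of_int n0 *\<^sub>R b' (Suc i) \<in> span (b' ` {..<j})" using m by (intro span_add span_scale)
        then show ?thesis using True l m e by (auto simp: b'Si)
      next
        case False
        then have "b l = b' l" using b'o by simp
        moreover have "b' l \<in> span (b' ` {..<j})" using l by (auto intro: span_base)
        ultimately show ?thesis using l by simp
      qed
    qed
    have "span (b' ` {..<j}) = span (b ` {..<j})" using A B by (simp only: span_eq)
    then show ?thesis unfolding hgt_def using b'o[of j] j by simp
  qed
  have z: "zsp n b' = zsp n b"
  proof (rule zsp_eqI)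
    fix l assume l: "l < n"
    show "b' l \<in> zsp n b"
    proof (cases "l = i \<or> l = Suc i")
      case True
      have m: "b i \<in> zsp n b" "b (Suc i) \<in> zsp n b" using i by (auto intro: zsp_base)
      have "b (Suc i) - of_int n0 *\<^sub>R b i \<in> zsp n b" using m by (intro zsp_diff zsp_scale)
      then show ?thesis using True m by (auto simp: b'i b'Si)
    next
      case False
      then have "b' l = b l" using b'o by simp
      then show ?thesis using zsp_base[OF l, of b] by simp
    qed
    show "b l \<in> zsp n b'"
    proof (cases "l = i \<or> l = Suc i")
      case True
      have e: "b (Suc i) = b' i + of_int n0 *\<^sub>R b' (Suc i)" by (simp add: b'i b'Si)
      have m: "b' i \<in> zsp n b'" "b' (Suc i) \<in> zsp n b'" using i by (auto intro: zsp_base)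
      have "b' i + of_int n0 *\<^sub>R b' (Suc i) \<in> zsp n b'" using m by (intro zsp_add zsp_scale)
      then show ?thesis using True m e by (auto simp: b'Si)
    next
      case False
      then have "b' l = b l" using b'o by simp
      then show ?thesis using zsp_base[OF l, of b'] by simp
    qed
  qed
  show ?thesis using z h1 h2 h3 h4 by blast
qed


lemma size_red_step:
  fixes b' :: "nat \<Rightarrow> 'a::euclidean_space"
  assumes r: "r < n"
  shows "\<exists>b''. zsp n b'' = zsp n b' \<and> (\<forall>j. hgt b'' j = hgt b' j) \<and> (\<forall>j. j \<noteq> r \<longrightarrow> b'' j = b' j) \<and>
     norm (b'' r) \<le> hgt b' r + (1/2) * (\<Sum>l<r. norm (b' l))"
proof -
  obtain y w where yw: "b' r = y + w" "y \<in> span (b' ` {..<r})" "\<And>x. x \<in> span (b' ` {..<r}) \<Longrightarrow> orthogonal w x"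
    using decomp_exists[where x="b' r" and S="b' ` {..<r}"] by blast
  have hw: "hgt b' r = norm w" unfolding hgt_def by (rule infdist_decomp[OF yw])
  obtain x where x: "y = (\<Sum>l<r. x l *\<^sub>R b' l)" using span_prefix_repr[OF yw(2)] by blast
  define c where "c = (\<Sum>l<r. of_int (round (x l)) *\<^sub>R b' l)"
  define b'' where "b'' = b'(r := b' r - c)"
  have b''o: "b'' j = b' j" if "j \<noteq> r" for j unfolding b''_def using that by simp
  have b''r: "b'' r = b' r - c" unfolding b''_def by simp
  have cspan: "c \<in> span (b' ` {..<r})" unfolding c_def
    by (intro span_sum span_scale span_base) auto
  have spans: "span (b'' ` {..<j}) = span (b' ` {..<j})" for j
  proof (cases "j \<le> r")
    case True
    then have "b'' ` {..<j} = b' ` {..<j}" using b''o by auto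
    then show ?thesis by simp
  next
    case False
    have sub: "span (b' ` {..<r}) \<subseteq> span (b' ` {..<j})" using False by (intro span_mono) auto
    have sub': "span (b'' ` {..<r}) \<subseteq> span (b'' ` {..<j})" using False by (intro span_mono) auto
    have eqr: "b'' ` {..<r} = b' ` {..<r}" using b''o by auto
    have A: "b'' ` {..<j} \<subseteq> span (b' ` {..<j})"
    proof
      fix z assume "z \<in> b'' ` {..<j}"
      then obtain l where l: "l < j" "z = b'' l" by auto
      show "z \<in> span (b' ` {..<j})"
      proof (cases "l = r")
        case True
        have "b' r \<in> span (b' ` {..<j})" using l True by (auto intro: span_base)
        moreover have "c \<in> span (b' ` {..<j})" using cspan sub by blast
        ultimately show ?thesis using True l b''r by (simp add: span_diff)
      next
        case False
        then show ?thesis using l b''o[OF False] by (auto intro: span_base)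
      qed
    qed
    have B: "b' ` {..<j} \<subseteq> span (b'' ` {..<j})"
    proof
      fix z assume "z \<in> b' ` {..<j}"
      then obtain l where l: "l < j" "z = b' l" by auto
      show "z \<in> span (b'' ` {..<j})"
      proof (cases "l = r")
        case True
        have "b'' r \<in> span (b'' ` {..<j})" using l True by (auto intro: span_base)
        moreover have "c \<in> span (b'' ` {..<j})" using cspan sub' unfolding eqr by blast
        ultimately have "b'' r + c \<in> span (b'' ` {..<j})" by (rule span_add)
        then show ?thesis using True l b''r by simp
      next
        case False
        then have "z = b'' l" using l b''o by simp
        then show ?thesis using l by (auto intro: span_base)
      qed
    qed
    show ?thesis using A B by (simp only: span_eq)
  qed
  have hg: "hgt b'' j = hgt b' j" for j
  proof (cases "j = r")
    case True
    have "hgt b'' r = hgt b' r"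
      by (rule hgt_translate[of _ _ _ "- c"]) (use b''r cspan spans in \<open>auto intro: span_neg\<close>)
    then show ?thesis using True by simp
  next
    case False
    then show ?thesis unfolding hgt_def using spans b''o by simp
  qed
  have cz: "c \<in> zsp n b'" unfolding c_def by (rule zsp_sum_mem) (use r in \<open>auto intro: zsp_base\<close>)
  have cz': "c \<in> zsp n b''"
  proof -
    have "c = (\<Sum>l<r. of_int (round (x l)) *\<^sub>R b'' l)" unfolding c_def by (intro sum.cong) (auto simp: b''o)
    also have "\<dots> \<in> zsp n b''" by (rule zsp_sum_mem) (use r in \<open>auto intro: zsp_base\<close>)
    finally show ?thesis .
  qed
  have z: "zsp n b'' = zsp n b'"
  proof (rule zsp_eqI)
    fix l assume l: "l < n"
    show "b'' l \<in> zsp n b'"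
    proof (cases "l = r")
      case True then show ?thesis using b''r cz zsp_base[OF l, of b'] by (simp add: zsp_diff)
    next
      case False then show ?thesis using b''o[OF False] zsp_base[OF l, of b'] by simp
    qed
    show "b' l \<in> zsp n b''"
    proof (cases "l = r")
      case True
      have "b'' r + c \<in> zsp n b''" using cz' zsp_base[OF r, of b''] by (simp add: zsp_add)
      then show ?thesis using True b''r by simp
    next
      case False then show ?thesis using b''o[OF False] zsp_base[OF l, of b''] by simp
    qed
  qed
  have "b'' r = w + (\<Sum>l<r. (x l - of_int (round (x l))) *\<^sub>R b' l)"
    unfolding b''r yw(1) x c_def by (simp add: scaleR_diff_left sum_subtractf algebra_simps)
  then have "norm (b'' r) \<le> norm w + norm (\<Sum>l<r. (x l - of_int (round (x l))) *\<^sub>R b' l)"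
    by (simp add: norm_triangle_ineq)
  also have "norm (\<Sum>l<r. (x l - of_int (round (x l))) *\<^sub>R b' l) \<le> (\<Sum>l<r. norm ((x l - of_int (round (x l))) *\<^sub>R b' l))"
    by (rule norm_sum)
  also have "\<dots> \<le> (\<Sum>l<r. (1/2) * norm (b' l))"
  proof (rule sum_mono)
    fix l
    have "\<bar>x l - of_int (round (x l))\<bar> \<le> 1/2" using of_int_round_abs_le[of "x l"] by linarith
    then have "\<bar>x l - of_int (round (x l))\<bar> * norm (b' l) \<le> 1/2 * norm (b' l)"
      by (rule mult_right_mono) simp
    then show "norm ((x l - of_int (round (x l))) *\<^sub>R b' l) \<le> 1/2 * norm (b' l)"
      by simp
  qed
  also have "\<dots> = (1/2) * (\<Sum>l<r. norm (b' l))" by (simp add: sum_distrib_left)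
  finally have "norm (b'' r) \<le> hgt b' r + (1/2) * (\<Sum>l<r. norm (b' l))" using hw by simp
  then show ?thesis using z hg b''o by blast
qed

lemma size_red:
  fixes b :: "nat \<Rightarrow> 'a::euclidean_space"
  shows "\<exists>b'. zsp n b' = zsp n b \<and> (\<forall>j. hgt b' j = hgt b j) \<and>
     (\<forall>j<n. norm (b' j) \<le> hgt b j + (1/2) * (\<Sum>l<j. norm (b' l)))"
proof -
  have "r \<le> n \<Longrightarrow> \<exists>b'. zsp n b' = zsp n b \<and> (\<forall>j. hgt b' j = hgt b j) \<and>
     (\<forall>j<r. norm (b' j) \<le> hgt b j + (1/2) * (\<Sum>l<j. norm (b' l)))" for r
  proof (induction r)
    case 0
    show ?case by (rule exI[of _ b]) simp
  next
    case (Suc r)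
    then obtain b' where b': "zsp n b' = zsp n b" "\<forall>j. hgt b' j = hgt b j"
      "\<forall>j<r. norm (b' j) \<le> hgt b j + (1/2) * (\<Sum>l<j. norm (b' l))" by auto
    obtain b'' where b'': "zsp n b'' = zsp n b'" "\<forall>j. hgt b'' j = hgt b' j" "\<forall>j. j \<noteq> r \<longrightarrow> b'' j = b' j"
      "norm (b'' r) \<le> hgt b' r + (1/2) * (\<Sum>l<r. norm (b' l))"
      using size_red_step[of r n b'] Suc.prems by auto
    have sums: "(\<Sum>l<j. norm (b'' l)) = (\<Sum>l<j. norm (b' l))" if "j \<le> r" for j
      using that b''(3) by (intro sum.cong) auto
    have "\<forall>j<Suc r. norm (b'' j) \<le> hgt b j + (1/2) * (\<Sum>l<j. norm (b'' l))"
    proof (intro allI impI)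
      fix j assume j: "j < Suc r"
      show "norm (b'' j) \<le> hgt b j + (1/2) * (\<Sum>l<j. norm (b'' l))"
      proof (cases "j = r")
        case True then show ?thesis using b''(4) b'(2) sums[of r] by simp
      next
        case False
        then have "j < r" using j by simp
        then show ?thesis using b'(3) b''(3) sums[of j] False by simp
      qed
    qed
    then show ?case using b' b'' by auto
  qed
  then show ?thesis by blast
qed


lemma finite_int_vectors_ball:
  "finite {z::real^'k::finite. z \<in> int_vectors \<and> norm z \<le> B}"
proof -
  define N where "N = \<lceil>B\<rceil>"
  let ?S = "PiE (UNIV::'k set) (\<lambda>_. {-N..N})"
  have "{z::real^'k. z \<in> int_vectors \<and> norm z \<le> B} \<subseteq> (\<lambda>f. \<chi> i. of_int (f i)) ` ?S"
  proof
    fix z :: "real^'k" assume z: "z \<in> {z. z \<in> int_vectors \<and> norm z \<le> B}"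
    have zi: "z $ i = of_int \<lfloor>z $ i\<rfloor>" for i
    proof -
      from z have "z $ i \<in> \<int>" unfolding int_vectors_def by blast
      then obtain n where "z $ i = of_int n" by (rule Ints_cases)
      then show ?thesis by simp
    qed
    have "\<bar>z $ i\<bar> \<le> B" for i using z component_le_norm_cart[of z i] by simp
    then have "\<lfloor>z $ i\<rfloor> \<in> {-N..N}" for i
    proof -
      have a: "- B \<le> z $ i" "z $ i \<le> B" using \<open>\<bar>z $ i\<bar> \<le> B\<close> by auto
      have "\<lfloor>z $ i\<rfloor> \<le> \<lfloor>B\<rfloor>" using a(2) by (rule floor_mono)
      also have "\<dots> \<le> \<lceil>B\<rceil>" by (rule floor_le_ceiling)
      finally have u: "\<lfloor>z $ i\<rfloor> \<le> N" unfolding N_def .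
      have "\<lceil>- z $ i\<rceil> \<le> \<lceil>B\<rceil>" using a(1) by (intro ceiling_mono) simp
      then have "- \<lfloor>z $ i\<rfloor> \<le> N" unfolding N_def by (simp add: ceiling_minus)
      then show ?thesis using u by simp
    qed
    then have "(\<lambda>i. \<lfloor>z $ i\<rfloor>) \<in> ?S" by (auto simp: PiE_UNIV_domain)
    moreover have "z = (\<chi> i. of_int (\<lfloor>z $ i\<rfloor>))" using zi by (simp add: vec_eq_iff)
    ultimately show "z \<in> (\<lambda>f. \<chi> i. of_int (f i)) ` ?S"
      by (intro image_eqI[where x="\<lambda>i. \<lfloor>z $ i\<rfloor>"]) auto
  qed
  moreover have "finite ((\<lambda>f. \<chi> i. of_int (f i)) ` ?S :: (real^'k) set)"
    by (intro finite_imageI finite_PiE) auto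
  ultimately show ?thesis by (rule finite_subset)
qed

lemma finite_lattice_ball:
  fixes g :: "real^'k::finite^'k"
  assumes "det g \<noteq> 0"
  shows "finite {v \<in> lattice_of g. norm v \<le> B}"
proof -
  obtain gi where gi: "gi ** g = mat 1" using assms invertible_det_nz unfolding invertible_def by blast
  obtain K where K: "\<And>x. norm (gi *v x) \<le> norm x * K" "K > 0"
    using bounded_linear.pos_bounded[OF matrix_vector_mul_bounded_linear[of gi]] by blast
  have "{v \<in> lattice_of g. norm v \<le> B} \<subseteq> (\<lambda>z. g *v z) ` {z. z \<in> int_vectors \<and> norm z \<le> B * K}"
  proof
    fix v assume v: "v \<in> {v \<in> lattice_of g. norm v \<le> B}"
    then obtain z where z: "z \<in> int_vectors" "v = g *v z" unfolding lattice_of_def by auto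
    have "z = gi *v v" unfolding z(2) by (simp add: matrix_vector_mul_assoc gi)
    then have "norm z \<le> norm v * K" using K(1) by simp
    also have "\<dots> \<le> B * K" using v K(2) by (intro mult_right_mono) auto
    finally show "v \<in> (\<lambda>z. g *v z) ` {z. z \<in> int_vectors \<and> norm z \<le> B * K}" using z by blast
  qed
  moreover have "finite ((\<lambda>z. g *v z) ` {z. z \<in> int_vectors \<and> norm z \<le> B * K})"
    by (intro finite_imageI finite_int_vectors_ball)
  ultimately show ?thesis by (rule finite_subset)
qed

lemma growth_bound:
  fixes f :: "nat \<Rightarrow> real" and R :: real
  assumes R: "0 \<le> R" and f: "\<And>j. j < n \<Longrightarrow> f j \<le> R + (1/2) * (\<Sum>l<j. f l)"
    and f0: "\<And>j. 0 \<le> f j"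
  shows "\<And>j. j < n \<Longrightarrow> f j \<le> R * 2 ^ n"
proof -
  have S: "j \<le> n \<Longrightarrow> (\<Sum>l<j. f l) \<le> R * (2 ^ j - 1)" for j
  proof (induction j)
    case 0 then show ?case by simp
  next
    case (Suc j)
    have "(\<Sum>l<Suc j. f l) = (\<Sum>l<j. f l) + f j" by simp
    also have "\<dots> \<le> (\<Sum>l<j. f l) + (R + (1/2) * (\<Sum>l<j. f l))" using f[of j] Suc.prems by simp
    also have "\<dots> \<le> R * (2 ^ j - 1) * (3/2) + R" using Suc by simp
    also have "\<dots> \<le> R * (2 ^ Suc j - 1)"
    proof -
      have "(1::real) \<le> 2 ^ j" by simp
      then have "(2 ^ j - 1) * (3/2) + 1 \<le> (2 ^ Suc j - (1::real))" by (simp only: power_Suc left_diff_distrib)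
      then have "R * ((2 ^ j - 1) * (3/2) + 1) \<le> R * (2 ^ Suc j - 1)" using R by (rule mult_left_mono)
      moreover have "R * (2 ^ j - 1) * (3/2) + R = R * ((2 ^ j - 1) * (3/2) + 1)" by (simp add: distrib_left)
      ultimately show ?thesis by linarith
    qed
    finally show ?case .
  qed
  fix j assume j: "j < n"
  have "f j \<le> R + (1/2) * (R * (2 ^ j - 1))" using f[OF j] S[of j] j by simp
  also have "\<dots> \<le> R * 2 ^ j"
  proof -
    have "(1::real) \<le> 2 ^ j" by simp
    then have "(1::real) + (1/2) * (2 ^ j - 1) \<le> 2 ^ j" by (simp add: right_diff_distrib; linarith)
    then have "R * (1 + (1/2) * (2 ^ j - 1)) \<le> R * 2 ^ j" using R by (rule mult_left_mono)
    moreover have "R + (1/2) * (R * (2 ^ j - 1)) = R * (1 + (1/2) * (2 ^ j - 1))" by (simp add: distrib_left)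
    ultimately show ?thesis by linarith
  qed
  also have "\<dots> \<le> R * 2 ^ n" using R j by (intro mult_left_mono) auto
  finally show "f j \<le> R * 2 ^ n" .
qed


context enum_k begin

definition lexl :: "(nat \<Rightarrow> real) \<Rightarrow> (nat \<Rightarrow> real) \<Rightarrow> bool" where
  "lexl x y \<longleftrightarrow> (\<exists>i<CARD('k). (\<forall>j<i. x j = y j) \<and> x i < y i)"

lemma lexl_trans: "lexl x y \<Longrightarrow> lexl y z \<Longrightarrow> lexl x z"
proof -
  assume "lexl x y" "lexl y z"
  then obtain i1 i2 where a: "i1 < CARD('k)" "\<forall>j<i1. x j = y j" "x i1 < y i1"
    and b: "i2 < CARD('k)" "\<forall>j<i2. y j = z j" "y i2 < z i2" unfolding lexl_def by blast
  show "lexl x z" unfolding lexl_def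
  proof (cases i1 i2 rule: linorder_cases)
    case less
    then show "\<exists>i<CARD('k). (\<forall>j<i. x j = z j) \<and> x i < z i" using a b by (intro exI[of _ i1]) auto
  next
    case equal
    then show "\<exists>i<CARD('k). (\<forall>j<i. x j = z j) \<and> x i < z i" using a b by (intro exI[of _ i1]) auto
  next
    case greater
    then show "\<exists>i<CARD('k). (\<forall>j<i. x j = z j) \<and> x i < z i" using a b by (intro exI[of _ i2]) auto
  qed
qed

lemma lexl_irrefl: "\<not> lexl x x"
  unfolding lexl_def by auto

lemma exists_reduced:
  assumes nz: "det (matb e b0) \<noteq> 0"
  shows "\<exists>b. zsp CARD('k) b = zsp CARD('k) b0 \<and> (\<forall>i. Suc i < CARD('k) \<longrightarrow> hgt b i \<le> 2 * hgt b (Suc i))"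
proof -
  let ?k = "CARD('k)"
  define L where "L = zsp ?k b0"
  have L_lat: "L = lattice_of (matb e b0)" unfolding L_def lattice_of_matb ..
  define R0 where "R0 = (\<Sum>i<?k. hgt b0 i)"
  have R0: "0 \<le> R0" unfolding R0_def by (intro sum_nonneg hgt_nonneg)
  define Hv where "Hv = (\<lambda>(b::nat \<Rightarrow> real^'k) i. if i < ?k then hgt b i else 0)"
  define A where "A = {Hv b | b :: nat \<Rightarrow> real^'k. zsp ?k b = L \<and> (\<forall>i<?k. hgt b i \<le> R0)}"
  define F where "F = {v \<in> lattice_of (matb e b0). norm v \<le> R0 * 2 ^ ?k}"
  have finF: "finite F" unfolding F_def by (rule finite_lattice_ball[OF nz])
  have finA: "finite A"
  proof -
    have "A \<subseteq> Hv ` (PiE {..<?k} (\<lambda>_. F))"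
    proof
      fix H assume "H \<in> A"
      then obtain b where b: "H = Hv b" "zsp ?k b = L" "\<forall>i<?k. hgt b i \<le> R0" unfolding A_def by blast
      obtain b' where b': "zsp ?k b' = zsp ?k b" "\<forall>j. hgt b' j = hgt b j"
        "\<forall>j<?k. norm (b' j) \<le> hgt b j + (1/2) * (\<Sum>l<j. norm (b' l))"
        using size_red[of ?k b] by blast
      have nb: "norm (b' j) \<le> R0 * 2 ^ ?k" if "j < ?k" for j
      proof (rule growth_bound[of R0 ?k "\<lambda>j. norm (b' j)", OF R0 _ _ that])
        fix j assume "j < ?k"
        then show "norm (b' j) \<le> R0 + (1/2) * (\<Sum>l<j. norm (b' l))" using b'(3) b(3) by fastforce
      qed simp
      have inF: "b' j \<in> F" if "j < ?k" for j
      proof -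
        have "b' j \<in> zsp ?k b'" using that by (rule zsp_base)
        then have "b' j \<in> lattice_of (matb e b0)" using b'(1) b(2) L_lat by simp
        then show ?thesis unfolding F_def using nb[OF that] by simp
      qed
      define b'' where "b'' = restrict b' {..<?k}"
      have "b'' \<in> PiE {..<?k} (\<lambda>_. F)" unfolding b''_def using inF by auto
      moreover have "Hv b'' = H"
      proof
        fix i show "Hv b'' i = H i"
        proof (cases "i < ?k")
          case True
          have "hgt b'' i = hgt b' i" by (rule hgt_cong) (use True in \<open>simp add: b''_def\<close>)
          then show ?thesis using True b(1) b'(2) unfolding Hv_def by simp
        next
          case False then show ?thesis using b(1) unfolding Hv_def by simp
        qed
      qed
      ultimately show "H \<in> Hv ` (PiE {..<?k} (\<lambda>_. F))" by blast
    qed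
    moreover have "finite (Hv ` (PiE {..<?k} (\<lambda>_. F)))" using finF by (intro finite_imageI finite_PiE) auto
    ultimately show ?thesis by (rule finite_subset)
  qed
  have "Hv b0 \<in> A"
  proof -
    have "hgt b0 i \<le> R0" if "i < ?k" for i
      unfolding R0_def using that by (intro member_le_sum hgt_nonneg) auto
    then show ?thesis unfolding A_def L_def by blast
  qed
  define rel where "rel = {(x, y). x \<in> A \<and> y \<in> A \<and> lexl x y}"
  have "rel \<subseteq> A \<times> A" unfolding rel_def by auto
  then have "finite rel" using finA by (meson finite_SigmaI finite_subset)
  moreover have "trans rel" unfolding rel_def trans_def using lexl_trans by blast
  moreover have "irrefl rel" unfolding rel_def irrefl_def using lexl_irrefl by blast
  ultimately have "wf rel" by (intro finite_acyclic_wf) (simp_all add: acyclic_irrefl trancl_id)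
  then obtain H where H: "H \<in> A" "\<And>y. (y, H) \<in> rel \<Longrightarrow> y \<notin> A"
    using wfE_min[OF _ \<open>Hv b0 \<in> A\<close>] by metis
  then obtain b where b: "H = Hv b" "zsp ?k b = L" "\<forall>i<?k. hgt b i \<le> R0" unfolding A_def by blast
  have "hgt b i \<le> 2 * hgt b (Suc i)" if i: "Suc i < ?k" for i
  proof (rule ccontr)
    assume "\<not> hgt b i \<le> 2 * hgt b (Suc i)"
    then have sm: "hgt b (Suc i) < hgt b i / 2" by simp
    obtain b' where b': "zsp ?k b' = zsp ?k b" "\<forall>j<i. hgt b' j = hgt b j" "hgt b' i < hgt b i"
      "hgt b' (Suc i) \<le> hgt b i" "\<forall>j>Suc i. hgt b' j = hgt b j"
      using move_lem[OF i sm] by blast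
    have bd: "hgt b' j \<le> R0" if "j < ?k" for j
    proof -
      consider "j < i" | "j = i" | "j = Suc i" | "j > Suc i" by linarith
      then show ?thesis
      proof cases
        case 1 then show ?thesis using b' b(3) that by auto
      next
        case 2
        have "hgt b i \<le> R0" using b(3) i by simp
        then show ?thesis using b'(3) 2 by simp
      next
        case 3
        have "hgt b i \<le> R0" using b(3) i by simp
        then show ?thesis using b'(4) 3 by simp
      next
        case 4 then show ?thesis using b'(5) b(3) that by auto
      qed
    qed
    have inA: "Hv b' \<in> A" unfolding A_def using b'(1) b(2) bd by blast
    have "lexl (Hv b') (Hv b)" unfolding lexl_def
      by (rule exI[of _ i]) (use i b'(2,3) in \<open>auto simp: Hv_def\<close>)
    then have "(Hv b', H) \<in> rel" unfolding rel_def using inA H(1) b(1) by blast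
    then show False using H(2) inA by blast
  qed
  then show ?thesis using b(2) unfolding L_def by blast
qed

lemma flip_sign:
  fixes b :: "nat \<Rightarrow> real^'k"
  shows "\<exists>h. det h = - det (matb e b) \<and> lattice_of h = lattice_of (matb e b) \<and>
    (\<forall>i j. \<bar>h $ i $ j\<bar> = \<bar>matb e b $ i $ j\<bar>)"
proof -
  have k0: "0 < CARD('k)" by simp
  define b' where "b' = b(0 := - b 0)"
  define T where "T = transpose (matb e b)"
  have rowT: "row c T = b (ie c)" for c unfolding T_def transpose_matb row_def by simp
  have ie0: "ie c = 0 \<longleftrightarrow> c = e 0" for c using ie_e[OF k0] e_ie by metis
  have tr: "transpose (matb e b') = (\<chi> c. if c = e 0 then (-1) *s row c T else row c T)"
    unfolding transpose_matb rowT b'_def using ie0 by (auto simp: vec_eq_iff ie_e[OF k0])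
  have "det (matb e b') = det (transpose (matb e b'))" by simp
  also have "\<dots> = - det (\<chi> c. if c = e 0 then row c T else row c T)"
    unfolding tr by (subst det_row_mul) simp
  also have "(\<chi> c. if c = e 0 then row c T else row c T) = T" by (simp add: row_def vec_eq_iff)
  finally have d: "det (matb e b') = - det (matb e b)" unfolding T_def by simp
  have z: "zsp CARD('k) b' = zsp CARD('k) b"
  proof (rule zsp_eqI)
    fix l assume l: "l < CARD('k)"
    show "b' l \<in> zsp CARD('k) b"
      using zsp_base[OF l, of b] zsp_neg[OF zsp_base[OF k0, of b]] by (cases "l = 0") (auto simp: b'_def)
    have "b' 0 \<in> zsp CARD('k) b'" by (rule zsp_base[OF k0])
    then have "- b' 0 \<in> zsp CARD('k) b'" by (rule zsp_neg)
    then show "b l \<in> zsp CARD('k) b'"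
      using zsp_base[OF l, of b'] by (cases "l = 0") (auto simp: b'_def)
  qed
  have "\<bar>matb e b' $ i $ j\<bar> = \<bar>matb e b $ i $ j\<bar>" for i j
    unfolding matb_nth b'_def by (cases "ie j = 0") auto
  moreover have "lattice_of (matb e b') = lattice_of (matb e b)" by (simp only: lattice_of_matb z)
  ultimately show ?thesis using d by (intro exI[of _ "matb e b'"]) auto
qed

end


context enum_k begin

lemma mahler_e:
  assumes c: "0 < c"
  shows "\<exists>C. \<forall>g::real^'k^'k. \<bar>det g\<bar> = 1 \<longrightarrow> (\<forall>v\<in>lattice_of g. v \<noteq> 0 \<longrightarrow> c \<le> norm v) \<longrightarrow>
     (\<exists>h. det h = 1 \<and> (\<forall>i j. \<bar>h $ i $ j\<bar> \<le> C) \<and> lattice_of h = lattice_of g)"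
proof -
  let ?k = "CARD('k)"
  define m0 where "m0 = min c 1 / 2 ^ ?k"
  have m0: "0 < m0" "m0 \<le> 1"
  proof -
    have "(1::real) \<le> 2 ^ ?k" by simp
    moreover have "min c 1 \<le> 1" by simp
    ultimately have "min c 1 \<le> 2 ^ ?k" by linarith
    then show "m0 \<le> 1" unfolding m0_def by simp
    show "0 < m0" unfolding m0_def using c by simp
  qed
  define C1 where "C1 = 1 / m0 ^ ?k"
  have C1: "0 \<le> C1" unfolding C1_def using m0 by simp
  define C where "C = C1 * 2 ^ ?k"
  have "\<exists>h. det h = 1 \<and> (\<forall>i j. \<bar>h $ i $ j\<bar> \<le> C) \<and> lattice_of h = lattice_of g"
    if dg: "\<bar>det g\<bar> = 1" and lg: "\<forall>v\<in>lattice_of g. v \<noteq> 0 \<longrightarrow> c \<le> norm v" for g :: "real^'k^'k"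
  proof -
    define b0 where "b0 = (\<lambda>i. (\<chi> r. g $ r $ e i) :: real^'k)"
    have g0: "matb e b0 = g" unfolding b0_def by (simp add: vec_eq_iff matb_nth e_ie)
    have nz: "det (matb e b0) \<noteq> 0" using dg g0 by auto
    obtain b where b: "zsp ?k b = zsp ?k b0" "\<And>i. Suc i < ?k \<Longrightarrow> hgt b i \<le> 2 * hgt b (Suc i)"
      using exists_reduced[OF nz] by blast
    have latb: "zsp ?k b = lattice_of g" using b(1) g0 lattice_of_matb[of b0] by simp
    have "\<bar>det (matb e b)\<bar> = 1" using det_unimod[OF b(1) nz] g0 dg by simp
    then have prod1: "(\<Prod>i<?k. hgt b i) = 1" using det_hgt[of b] by simp
    have k0: "0 < ?k" by simp
    have hb0: "hgt b 0 = norm (b 0)" unfolding hgt_def by (simp add: dist_norm)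
    have "b 0 \<noteq> 0"
    proof
      assume "b 0 = 0"
      then have "hgt b 0 = 0" using hb0 by simp
      then have "(\<Prod>i<?k. hgt b i) = 0" using k0 by (intro prod_zero) auto
      then show False using prod1 by simp
    qed
    moreover have "b 0 \<in> lattice_of g" using zsp_base[OF k0, of b] latb by simp
    ultimately have "c \<le> hgt b 0" using lg hb0 by simp
    have low: "i < ?k \<Longrightarrow> min c 1 / 2 ^ i \<le> hgt b i" for i
    proof (induction i)
      case 0 then show ?case using \<open>c \<le> hgt b 0\<close> by simp
    next
      case (Suc i)
      have "min c 1 / 2 ^ Suc i = (min c 1 / 2 ^ i) / 2" by simp
      also have "\<dots> \<le> hgt b i / 2" using Suc by simp
      also have "\<dots> \<le> hgt b (Suc i)" using b(2)[OF Suc.prems] by simp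
      finally show ?case .
    qed
    have lowm: "m0 \<le> hgt b i" if "i < ?k" for i
    proof -
      have "(2::real) ^ i \<le> 2 ^ ?k" using that by (intro power_increasing) auto
      then have "min c 1 / 2 ^ ?k \<le> min c 1 / 2 ^ i" using c by (intro divide_left_mono) auto
      then show ?thesis using low[OF that] unfolding m0_def by linarith
    qed
    have up: "hgt b i \<le> C1" if i: "i < ?k" for i
    proof -
      have "m0 ^ ?k \<le> m0 ^ (?k - 1)" using m0 by (intro power_decreasing) auto
      also have "m0 ^ (?k - 1) = (\<Prod>j\<in>{..<?k} - {i}. m0)" using i by simp
      also have "\<dots> \<le> (\<Prod>j\<in>{..<?k} - {i}. hgt b j)" using lowm m0 by (intro prod_mono) auto
      finally have A: "m0 ^ ?k \<le> (\<Prod>j\<in>{..<?k} - {i}. hgt b j)" .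
      have "1 = hgt b i * (\<Prod>j\<in>{..<?k} - {i}. hgt b j)" using prod1 prod.remove[of "{..<?k}" i "hgt b"] i by simp
      also have "\<dots> \<ge> hgt b i * m0 ^ ?k" using A hgt_nonneg[of b i] by (intro mult_left_mono) auto
      finally have "hgt b i * m0 ^ ?k \<le> 1" .
      then show ?thesis unfolding C1_def using m0 by (simp add: field_simps)
    qed
    obtain b' where b': "zsp ?k b' = zsp ?k b" "\<forall>j. hgt b' j = hgt b j"
        "\<forall>j<?k. norm (b' j) \<le> hgt b j + (1/2) * (\<Sum>l<j. norm (b' l))"
      using size_red[of ?k b] by blast
    have nb: "norm (b' j) \<le> C" if "j < ?k" for j
      unfolding C_def
    proof (rule growth_bound[of C1 ?k "\<lambda>j. norm (b' j)", OF C1 _ _ that])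
      fix j assume j: "j < ?k"
      then show "norm (b' j) \<le> C1 + (1/2) * (\<Sum>l<j. norm (b' l))" using b'(3) up[OF j] by fastforce
    qed simp
    define h0 where "h0 = matb e b'"
    have ent: "\<bar>h0 $ i $ j\<bar> \<le> C" for i j
    proof -
      have "\<bar>h0 $ i $ j\<bar> = \<bar>b' (ie j) $ i\<bar>" unfolding h0_def matb_nth ..
      also have "\<dots> \<le> norm (b' (ie j))" by (rule component_le_norm_cart)
      also have "\<dots> \<le> C" by (rule nb[OF ie_lt])
      finally show ?thesis .
    qed
    have lat0: "lattice_of h0 = lattice_of g" unfolding h0_def lattice_of_matb b'(1) latb ..
    have zb': "zsp ?k b' = zsp ?k b0" using b'(1) b(1) by simp
    have d0: "\<bar>det h0\<bar> = 1" unfolding h0_def using det_unimod[OF zb' nz] g0 dg by simp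
    show ?thesis
    proof (cases "det h0 = 1")
      case True then show ?thesis using ent lat0 by blast
    next
      case False
      then have "det h0 = -1" using d0 by linarith
      obtain h where h: "det h = - det (matb e b')" "lattice_of h = lattice_of (matb e b')"
          "\<forall>i j. \<bar>h $ i $ j\<bar> = \<bar>matb e b' $ i $ j\<bar>"
        using flip_sign[of b'] by blast
      have "det h = 1" using h(1) \<open>det h0 = -1\<close> unfolding h0_def by simp
      moreover have "\<forall>i j. \<bar>h $ i $ j\<bar> \<le> C" using h(3) ent unfolding h0_def by simp
      moreover have "lattice_of h = lattice_of g" using h(2) lat0 unfolding h0_def by simp
      ultimately show ?thesis by blast
    qed
  qed
  then show ?thesis by blast
qed

end

lemma mahler:
  fixes c :: real
  assumes c: "0 < c"
  shows "\<exists>C. \<forall>g::real^'k::finite^'k. \<bar>det g\<bar> = 1 \<longrightarrow> (\<forall>v\<in>lattice_of g. v \<noteq> 0 \<longrightarrow> c \<le> norm v) \<longrightarrow>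
     (\<exists>h. det h = 1 \<and> (\<forall>i j. \<bar>h $ i $ j\<bar> \<le> C) \<and> lattice_of h = lattice_of g)"
proof -
  obtain e :: "nat \<Rightarrow> 'k" where "bij_betw e {0..<card (UNIV::'k set)} UNIV"
    using ex_bij_betw_nat_finite[of "UNIV::'k set"] by auto
  then have "bij_betw e {..<CARD('k)} (UNIV::'k set)" by (simp add: lessThan_atLeast0)
  then interpret enum_k e by unfold_locales
  show ?thesis by (rule mahler_e[OF c])
qed


lemma compact_lower_bound:
  fixes K :: "(real^'k::finite^'k) set"
  assumes K: "compact K" "\<forall>g\<in>K. det g = 1"
  shows "\<exists>\<mu>>0. \<forall>g\<in>K. \<forall>v\<in>lattice_of g. v \<noteq> 0 \<longrightarrow> \<mu> \<le> norm v"
proof (cases "K = {}")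
  case True then show ?thesis by (intro exI[of _ 1]) auto
next
  case False
  define S where "S = K \<times> sphere (0::real^'k) 1"
  have "sphere (0::real^'k) 1 \<noteq> {}"
    using vector_choose_size[of 1] by (auto simp: sphere_def)
  then have Sne: "S \<noteq> {}" unfolding S_def using False by auto
  have cS: "compact S" unfolding S_def using K(1) compact_sphere by (rule compact_Times)
  have mv: "\<And>x::(real^'k^'k) \<times> (real^'k). fst x *v snd x = (\<chi> r. \<Sum>c\<in>UNIV. fst x $ r $ c * snd x $ c)"
    by (simp add: matrix_vector_mult_def)
  have cont: "continuous_on S (\<lambda>x. norm (fst x *v snd x))"
    unfolding mv by (intro continuous_intros)
  obtain x0 where x0: "x0 \<in> S" "\<And>y. y \<in> S \<Longrightarrow> norm (fst x0 *v snd x0) \<le> norm (fst y *v snd y)"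
    using continuous_attains_inf[OF cS Sne cont] by blast
  define \<mu> where "\<mu> = norm (fst x0 *v snd x0)"
  have inv: "u = 0" if "g \<in> K" "g *v u = 0" for g u
  proof -
    have "det g \<noteq> 0" using K(2) that by simp
    then obtain gi where gi: "gi ** g = mat 1" using invertible_det_nz unfolding invertible_def by blast
    have "u = gi *v (g *v u)" by (simp add: matrix_vector_mul_assoc gi)
    then show ?thesis using that by simp
  qed
  have "\<mu> > 0"
  proof -
    have "fst x0 \<in> K" "snd x0 \<in> sphere 0 1" using x0(1) unfolding S_def by auto
    then have "fst x0 *v snd x0 \<noteq> 0" using inv by fastforce
    then show ?thesis unfolding \<mu>_def by simp
  qed
  moreover have "\<mu> \<le> norm v" if g: "g \<in> K" and v: "v \<in> lattice_of g" "v \<noteq> 0" for g v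
  proof -
    obtain z where z: "z \<in> int_vectors" "v = g *v z" using v(1) unfolding lattice_of_def by auto
    have znz: "z \<noteq> 0" using v z by auto
    then obtain c where c: "z $ c \<noteq> 0" by (metis vec_eq_iff zero_index)
    have "z $ c \<in> \<int>" using z(1) unfolding int_vectors_def by blast
    then obtain n where n: "z $ c = of_int n" by (rule Ints_cases)
    then have "1 \<le> \<bar>z $ c\<bar>" using c by simp
    also have "\<dots> \<le> norm z" by (rule component_le_norm_cart)
    finally have nz1: "1 \<le> norm z" .
    define u where "u = (1 / norm z) *\<^sub>R z"
    have u: "u \<in> sphere 0 1" unfolding u_def using znz by simp
    have "v = norm z *\<^sub>R (g *v u)" unfolding z(2) u_def using znz by (simp add: matrix_vector_mult_scaleR)
    then have "norm v = norm z * norm (g *v u)" by simp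
    moreover have "\<mu> \<le> norm (g *v u)" unfolding \<mu>_def using x0(2)[of "(g, u)"] g u unfolding S_def by simp
    moreover have "0 \<le> \<mu>" using \<open>\<mu> > 0\<close> by simp
    moreover have "1 * \<mu> \<le> norm z * norm (g *v u)"
      using nz1 calculation(2) calculation(3) by (intro mult_mono) auto
    ultimately show ?thesis by simp
  qed
  ultimately show ?thesis by blast
qed

lemma continuous_det: "continuous_on UNIV (det :: real^'k::finite^'k \<Rightarrow> real)"
proof -
  have eq: "det = (\<lambda>A::real^'k^'k. \<Sum>p\<in>{p. p permutes (UNIV::'k set)}. of_int (sign p) * (\<Prod>i\<in>UNIV. A $ i $ p i))"
    by (simp add: det_def[abs_def])
  show ?thesis unfolding eq by (intro continuous_intros)
qed

lemma compact_K: "compact {h::real^'k::finite^'k. det h = 1 \<and> (\<forall>i j. \<bar>h $ i $ j\<bar> \<le> C)}"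
proof -
  let ?K = "{h::real^'k^'k. det h = 1 \<and> (\<forall>i j. \<bar>h $ i $ j\<bar> \<le> C)}"
  have "?K = {h. det h = 1} \<inter> (\<Inter>i. \<Inter>j. {h. \<bar>h $ i $ j\<bar> \<le> C})" by auto
  moreover have "closed {h::real^'k^'k. det h = 1}"
    by (rule closed_Collect_eq[OF continuous_det]) (intro continuous_intros)
  moreover have "closed {h::real^'k^'k. \<bar>h $ i $ j\<bar> \<le> C}" for i j
    by (rule closed_Collect_le) (intro continuous_intros)+
  ultimately have cl: "closed ?K" by (auto intro!: closed_Inter closed_Int)
  have "norm h \<le> real CARD('k) * (real CARD('k) * C)" if "h \<in> ?K" for h
  proof -
    have "norm (h $ i) \<le> real CARD('k) * C" for i
    proof -
      have "norm (h $ i) \<le> (\<Sum>j\<in>UNIV. \<bar>h $ i $ j\<bar>)" by (rule norm_le_l1_cart)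
      also have "\<dots> \<le> (\<Sum>j\<in>(UNIV::'k set). C)" using that by (intro sum_mono) auto
      finally show ?thesis by simp
    qed
    moreover have "norm h \<le> (\<Sum>i\<in>UNIV. norm (h $ i))"
      unfolding norm_vec_def by (rule L2_set_le_sum) simp
    moreover have "(\<Sum>i\<in>UNIV. norm (h $ i)) \<le> (\<Sum>i\<in>(UNIV::'k set). real CARD('k) * C)"
      using calculation(1) by (intro sum_mono) auto
    moreover have "(\<Sum>i\<in>(UNIV::'k set). real CARD('k) * C) = real CARD('k) * (real CARD('k) * C)" by simp
    ultimately show ?thesis by linarith
  qed
  then have "bounded ?K" unfolding bounded_iff by blast
  then show ?thesis using cl by (simp add: compact_eq_bounded_closed)
qed


definition Umat :: "real^'n::finite^'m::finite \<Rightarrow> real^('m+'n)^('m+'n)" where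
  "Umat Y = (\<chi> r c. case r of
      Inl i \<Rightarrow> (case c of Inl i' \<Rightarrow> (if i = i' then 1 else 0) | Inr j \<Rightarrow> Y $ i $ j)
    | Inr j \<Rightarrow> (case c of Inl _ \<Rightarrow> 0 | Inr j' \<Rightarrow> (if j = j' then 1 else 0)))"

lemma Umat_mulv_Inl: "(Umat Y *v z) $ Inl i = z $ Inl i + (\<Sum>j\<in>UNIV. Y $ i $ j * z $ Inr j)"
  by (simp add: matrix_vector_mult_def Umat_def sum_UNIV_plus if_distrib[of "\<lambda>x. x * _"] cong: if_cong)

lemma Umat_mulv_Inr: "(Umat Y *v z) $ Inr j = z $ Inr j"
  by (simp add: matrix_vector_mult_def Umat_def sum_UNIV_plus if_distrib[of "\<lambda>x. x * _"] cong: if_cong)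

lemma lattice_xY_Umat:
  fixes Y :: "real^'n::finite^'m::finite"
  shows "lattice_xY Y = (\<lambda>z. Umat Y *v z) ` int_vectors"
proof (intro set_eqI iffI)
  fix v assume "v \<in> lattice_xY Y"
  then obtain p q where v: "v = vecYpq Y p q" using lattice_xY_iff by blast
  define z :: "real^('m+'n)" where "z = (\<chi> k. case k of Inl i \<Rightarrow> of_int (p i) | Inr j \<Rightarrow> of_int (q j))"
  have "z \<in> int_vectors" unfolding int_vectors_def z_def by (auto split: sum.split)
  moreover have "Umat Y *v z = v"
  proof -
    have "(Umat Y *v z) $ k = v $ k" for k
      by (cases k) (simp_all add: Umat_mulv_Inl Umat_mulv_Inr v z_def)
    then show ?thesis by (simp add: vec_eq_iff)
  qed
  ultimately show "v \<in> (\<lambda>z. Umat Y *v z) ` int_vectors" by (intro image_eqI[of _ _ z]) auto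
next
  fix v assume "v \<in> (\<lambda>z. Umat Y *v z) ` int_vectors"
  then obtain z where z: "z \<in> int_vectors" "v = Umat Y *v z" by auto
  have zi: "z $ c = of_int \<lfloor>z $ c\<rfloor>" for c
  proof -
    from z(1) have "z $ c \<in> \<int>" unfolding int_vectors_def by blast
    then obtain n where "z $ c = of_int n" by (rule Ints_cases)
    then show ?thesis by simp
  qed
  define p where "p = (\<lambda>i. \<lfloor>z $ Inl i\<rfloor>)"
  define q where "q = (\<lambda>j. \<lfloor>z $ Inr j\<rfloor>)"
  have "v $ k = vecYpq Y p q $ k" for k
  proof (cases k)
    case (Inl i)
    have "v $ k = z $ Inl i + (\<Sum>j\<in>UNIV. Y $ i $ j * z $ Inr j)" unfolding z(2) Inl by (rule Umat_mulv_Inl)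
    also have "\<dots> = vecYpq Y p q $ k" unfolding Inl p_def q_def vecYpq_Inl
      by (subst zi[of "Inl i"]) (simp add: zi[symmetric])
    finally show ?thesis .
  next
    case (Inr j)
    then show ?thesis unfolding z(2) by (simp add: Umat_mulv_Inr q_def zi[symmetric])
  qed
  then have "v = vecYpq Y p q" by (simp add: vec_eq_iff)
  then show "v \<in> lattice_xY Y" using lattice_xY_iff by blast
qed

lemma det_Umat:
  fixes Y :: "real^'n::finite^'m::finite"
  shows "det (Umat Y) = 1"
proof -
  let ?U = "UNIV :: ('m+'n) set"
  let ?PU = "{p. p permutes ?U}"
  let ?pp = "\<lambda>p. of_int (sign p) * prod (\<lambda>i. Umat Y $ i $ p i) ?U"
  have fPU: "finite ?PU" by (rule finite_permutations) simp
  have id0: "{id} \<subseteq> ?PU" by (auto simp: permutes_id)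
  have p0: "\<forall>p \<in> ?PU - {id}. ?pp p = 0"
  proof
    fix p assume p: "p \<in> ?PU - {id}"
    show "?pp p = 0"
    proof (rule ccontr)
      assume "?pp p \<noteq> 0"
      then have nz: "Umat Y $ r $ p r \<noteq> 0" for r by auto
      have inj: "inj p" using p by (auto dest: permutes_inj)
      have pr: "p (Inr j) = Inr j" for j
        using nz[of "Inr j"] by (cases "p (Inr j)") (auto simp: Umat_def split: if_splits)
      have pl: "p (Inl i) = Inl i" for i
      proof (cases "p (Inl i)")
        case (Inl i') then show ?thesis using nz[of "Inl i"] by (auto simp: Umat_def split: if_splits)
      next
        case (Inr j)
        then have "p (Inl i) = p (Inr j)" using pr by simp
        then show ?thesis using inj by (auto dest: injD)
      qed
      have "p = id"
      proof
        fix x show "p x = id x" by (cases x) (simp_all add: pl pr)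
      qed
      then show False using p by simp
    qed
  qed
  from sum.mono_neutral_cong_left[OF fPU id0 p0] have "det (Umat Y) = ?pp id"
    unfolding det_def by simp
  also have "\<dots> = 1"
  proof -
    have "Umat Y $ r $ r = 1" for r by (cases r) (simp_all add: Umat_def)
    then show ?thesis by (simp add: sign_id)
  qed
  finally show ?thesis .
qed

lemma orbit_lattice:
  fixes Y :: "real^'n::finite^'m::finite" and a :: "real^('m+'n)"
  assumes a: "a \<in> frak_a"
  shows "\<exists>g. det g = 1 \<and> lattice_of g = exp_act a ` lattice_xY Y"
proof -
  define D :: "real^('m+'n)^('m+'n)" where "D = (\<chi> r c. if r = c then exp (a $ r) else 0)"
  define g where "g = D ** Umat Y"
  have DU: "g $ i $ j = exp (a $ i) * Umat Y $ i $ j" for i j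
    unfolding g_def D_def
    by (simp add: matrix_matrix_mult_def if_distrib[of "\<lambda>x. x * _"] cong: if_cong)
  have gv: "g *v z = exp_act a (Umat Y *v z)" for z
    by (simp add: vec_eq_iff matrix_vector_mult_def exp_act_def DU sum_distrib_left mult.assoc)
  have "det D = (\<Prod>r\<in>UNIV. exp (a $ r))" unfolding D_def by (subst det_diagonal) auto
  also have "\<dots> = exp (\<Sum>r\<in>UNIV. a $ r)" by (simp add: exp_sum)
  also have "\<dots> = 1" using a unfolding frak_a_def by simp
  finally have "det g = 1" unfolding g_def by (simp add: det_mul det_Umat)
  moreover have "lattice_of g = exp_act a ` lattice_xY Y"
    unfolding lattice_of_def lattice_xY_Umat gv by (simp add: image_image)
  ultimately show ?thesis by blast
qed

lemma xY_sup:
  assumes "w \<in> lattice_xY Y" "w \<noteq> 0"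
  shows "\<exists>k. 1 \<le> \<bar>w $ k\<bar>"
proof -
  obtain p q where w: "w = vecYpq Y p q" using assms(1) lattice_xY_iff by blast
  show ?thesis
  proof (cases "\<exists>j. q j \<noteq> 0")
    case True
    then obtain j where "q j \<noteq> 0" by blast
    then have "1 \<le> \<bar>w $ Inr j\<bar>" unfolding w by simp
    then show ?thesis by blast
  next
    case False
    then have q0: "q j = 0" for j by simp
    obtain k where k: "w $ k \<noteq> 0" using assms(2) by (metis vec_eq_iff zero_index)
    show ?thesis
    proof (cases k)
      case (Inl i)
      then have "p i \<noteq> 0" using k q0 unfolding w by simp
      then have "1 \<le> \<bar>w $ Inl i\<bar>" unfolding w using q0 by simp
      then show ?thesis by blast
    next
      case (Inr j) then show ?thesis using k q0 unfolding w by simp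
    qed
  qed
qed


lemma norm_le_card_supnorm: "norm (v::real^'k::finite) \<le> real CARD('k) * supnorm v"
proof -
  have "norm v \<le> (\<Sum>i\<in>UNIV. \<bar>v $ i\<bar>)" by (rule norm_le_l1_cart)
  also have "\<dots> \<le> (\<Sum>i\<in>(UNIV::'k set). supnorm v)" by (intro sum_mono supnorm_ge)
  finally show ?thesis by simp
qed

theorem partC:
  fixes Y :: "real^'n::finite^'m::finite"
  shows "Y \<in> WA_times \<longleftrightarrow>
           \<not> rel_compact_in_X ((\<lambda>a. exp_act a ` lattice_xY Y) ` (E_cone :: (real^('m + 'n)) set))"
proof
  assume WA: "Y \<in> WA_times"
  show "\<not> rel_compact_in_X ((\<lambda>a. exp_act a ` lattice_xY Y) ` (E_cone :: (real^('m + 'n)) set))"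
  proof
    assume "rel_compact_in_X ((\<lambda>a. exp_act a ` lattice_xY Y) ` (E_cone :: (real^('m + 'n)) set))"
    then obtain K where K: "compact K" "\<forall>g\<in>K. det g = 1"
      "\<forall>L\<in>(\<lambda>a. exp_act a ` lattice_xY Y) ` (E_cone :: (real^('m + 'n)) set). \<exists>g\<in>K. lattice_of g = L"
      unfolding rel_compact_in_X_def by blast
    obtain \<mu> where mu: "\<mu> > 0" "\<forall>g\<in>K. \<forall>v\<in>lattice_of g. v \<noteq> 0 \<longrightarrow> \<mu> \<le> norm v"
      using compact_lower_bound[OF K(1,2)] by blast
    define \<epsilon> where "\<epsilon> = \<mu> / real CARD('m + 'n)"
    have kpos: "0 < real CARD('m + 'n)" by (simp only: of_nat_0_less_iff zero_less_card_finite)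
    then have eps: "\<epsilon> > 0" unfolding \<epsilon>_def using mu(1) by (rule divide_pos_pos[rotated])
    obtain t a where ta: "a \<in> (C0 t :: (real^('m+'n)) set)" "delta (exp_act a ` lattice_xY Y) < \<epsilon>"
      using WA eps unfolding partB by blast
    have aE: "a \<in> E_cone" using ta(1) unfolding C0_def by simp
    then obtain g where g: "g \<in> K" "lattice_of g = exp_act a ` lattice_xY Y" using K(3) by blast
    have "\<epsilon> \<le> supnorm v" if v: "v \<in> exp_act a ` lattice_xY Y" "v \<noteq> 0" for v
    proof -
      have "\<mu> \<le> norm v" using mu(2) g v by auto
      also have "\<dots> \<le> real CARD('m + 'n) * supnorm v" by (rule norm_le_card_supnorm)
      finally have "\<mu> \<le> supnorm v * real CARD('m + 'n)" by (simp only: mult.commute)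
      then show ?thesis unfolding \<epsilon>_def using pos_divide_le_eq[OF kpos] by blast
    qed
    then have "\<epsilon> \<le> delta (exp_act a ` lattice_xY Y)"
      using lattice_nonzero_elem[of a Y] by (intro delta_ge) auto
    then show False using ta(2) by simp
  qed
next
  assume nrc: "\<not> rel_compact_in_X ((\<lambda>a. exp_act a ` lattice_xY Y) ` (E_cone :: (real^('m + 'n)) set))"
  show "Y \<in> WA_times"
  proof (rule ccontr)
    assume "Y \<notin> WA_times"
    then obtain \<epsilon> R where eps: "\<epsilon> > 0"
      and H: "\<And>t. t \<ge> R \<Longrightarrow> t \<ge> 0 \<Longrightarrow> \<not> (\<exists>a\<in>(C0 t :: (real^('m + 'n)) set). delta (exp_act a ` lattice_xY Y) < \<epsilon>)"
      unfolding partB by blast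
    define R' where "R' = max R 0"
    define c0 where "c0 = min \<epsilon> (exp (- R'))"
    have c0: "c0 > 0" unfolding c0_def using eps by simp
    have bound: "c0 \<le> norm v" if a: "a \<in> (E_cone :: (real^('m + 'n)) set)" and v: "v \<in> exp_act a ` lattice_xY Y" "v \<noteq> 0" for a v
    proof -
      define t where "t = (\<Sum>i\<in>UNIV. a $ Inl i)"
      have aC: "a \<in> C0 t" using a unfolding C0_def t_def by simp
      note ap = C0_props[OF aC]
      have t0: "t \<ge> 0" unfolding t_def using ap(1) by (intro sum_nonneg) (simp add: less_imp_le)
      have sv: "c0 \<le> supnorm v"
      proof (cases "t \<ge> R")
        case True
        then have "\<not> delta (exp_act a ` lattice_xY Y) < \<epsilon>" using H t0 aC by blast
        then have "\<epsilon> \<le> supnorm v" using delta_le[OF v] by simp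
        then show ?thesis unfolding c0_def by simp
      next
        case False
        obtain w where w: "w \<in> lattice_xY Y" "v = exp_act a w" using v(1) by blast
        have "w \<noteq> 0" using v(2) w(2) by (auto simp: exp_act_def vec_eq_iff)
        then obtain k where k: "1 \<le> \<bar>w $ k\<bar>" using xY_sup w(1) by blast
        have ak: "- R' \<le> a $ k"
        proof (cases k)
          case (Inl i) then show ?thesis using ap(1)[of i] unfolding R'_def by simp
        next
          case (Inr j)
          have "(\<Sum>j'\<in>UNIV. a $ Inr j') = a $ Inr j + (\<Sum>j'\<in>UNIV - {j}. a $ Inr j')"
            by (rule sum.remove) auto
          moreover have "(\<Sum>j'\<in>UNIV - {j}. a $ Inr j') \<le> 0"
            using ap(2) by (intro sum_nonpos) (simp add: less_imp_le)
          ultimately have "- t \<le> a $ Inr j" using ap(4) by simp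
          then show ?thesis using Inr False unfolding R'_def by simp
        qed
        have "c0 \<le> exp (- R')" unfolding c0_def by simp
        also have "\<dots> \<le> exp (a $ k)" using ak by simp
        also have "\<dots> \<le> exp (a $ k) * \<bar>w $ k\<bar>" using k by simp
        also have "\<dots> = \<bar>v $ k\<bar>" unfolding w(2) by (simp add: abs_mult)
        also have "\<dots> \<le> supnorm v" by (rule supnorm_ge)
        finally show ?thesis .
      qed
      then show ?thesis using supnorm_le_norm[of v] by simp
    qed
    obtain C where C: "\<forall>g::real^('m+'n)^('m+'n). \<bar>det g\<bar> = 1 \<longrightarrow> (\<forall>v\<in>lattice_of g. v \<noteq> 0 \<longrightarrow> c0 \<le> norm v) \<longrightarrow>
     (\<exists>h. det h = 1 \<and> (\<forall>i j. \<bar>h $ i $ j\<bar> \<le> C) \<and> lattice_of h = lattice_of g)"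
      using mahler[OF c0] by blast
    define K where "K = {h::real^('m+'n)^('m+'n). det h = 1 \<and> (\<forall>i j. \<bar>h $ i $ j\<bar> \<le> C)}"
    have "rel_compact_in_X ((\<lambda>a. exp_act a ` lattice_xY Y) ` (E_cone :: (real^('m + 'n)) set))"
      unfolding rel_compact_in_X_def
    proof (intro exI[of _ K] conjI ballI)
      show "compact K" unfolding K_def by (rule compact_K)
      fix g assume "g \<in> K" then show "det g = 1" unfolding K_def by simp
    next
      fix L assume "L \<in> (\<lambda>a. exp_act a ` lattice_xY Y) ` (E_cone :: (real^('m + 'n)) set)"
      then obtain a where a: "a \<in> (E_cone :: (real^('m + 'n)) set)" "L = exp_act a ` lattice_xY Y" by blast
      have "a \<in> frak_a" using a(1) unfolding E_cone_def by simp
      then obtain g where g: "det g = 1" "lattice_of g = exp_act a ` lattice_xY Y"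
        using orbit_lattice by blast
      have "\<forall>v\<in>lattice_of g. v \<noteq> 0 \<longrightarrow> c0 \<le> norm v" using bound[OF a(1)] g(2) by simp
      moreover have "\<bar>det g\<bar> = 1" using g(1) by simp
      ultimately obtain h where "det h = 1" "\<forall>i j. \<bar>h $ i $ j\<bar> \<le> C" "lattice_of h = lattice_of g"
        using C by blast
      then show "\<exists>g\<in>K. lattice_of g = L" unfolding K_def using g(2) a(2) by auto
    qed
    then show False using nrc by simp
  qed
qed

theorem mainTheorem12:
  fixes Y :: "real^'n^'m"
  shows "(Y \<in> Sing_times \<longleftrightarrow>
           (\<forall>\<epsilon>>0. \<exists>t0>0. \<forall>t\<ge>t0. \<exists>a\<in>(C0 t :: (real^('m + 'n)) set).
              delta (exp_act a ` lattice_xY Y) < \<epsilon>))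
       \<and> (Y \<in> WA_times \<longleftrightarrow>
           (\<forall>\<epsilon>>0. \<forall>R. \<exists>t\<ge>R. t \<ge> 0 \<and> (\<exists>a\<in>(C0 t :: (real^('m + 'n)) set).
              delta (exp_act a ` lattice_xY Y) < \<epsilon>)))
       \<and> (Y \<in> WA_times \<longleftrightarrow>
           \<not> rel_compact_in_X ((\<lambda>a. exp_act a ` lattice_xY Y) ` (E_cone :: (real^('m + 'n)) set)))"
  using partA[of Y] partB[of Y] partC[of Y] by blast


end
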